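(* Let $M$ be a $C^\infty$ manifold with a torsion-free linear connection $\nabla$, and let $p\in M$. Let $\mathcal{U}_s:=\{\nabla S|_p-\mathrm{sym}(\nabla S)|_p : S\in\mathcal{T}_2M\text{ symmetric}\}$ and $\mathcal{U}_a:=\{\nabla A|_p-\mathrm{alt}(\nabla A)|_p : A\in\mathcal{T}_2M\text{ alternating}\}$ (note $\mathrm{alt}(\nabla A)=dA$). Let $\mathcal U$ be either $\mathcal U_s$ or $\mathcal U_a$. Then for each of the four types $$y_{t'}^*(S\otimes U),\quad y_{t'}^*(U\otimes S),\quad y_{t'}^*(A\otimes U),\quad y_{t'}^*(U\otimes A),$$ where $S$ (resp. $A$) ranges over all symmetric (resp. alternating) covariant tensors of order 2 on $M_p$ and $U$ ranges over $\mathcal U$, the vector space of algebraic covariant derivative curvature tensors in $\mathcal{T}_5M_p$ equals the set of all finite sums of tensors of that type.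
   Context: $\mathbb{K}=\mathbb{R}$. $\mathrm{sym}$ and $\mathrm{alt}$ are total symmetrization/antisymmetrization over all three indices: $X_{(ijk)}=\frac16\sum_{q\in\mathcal S_3}X_{i_{q(1)}i_{q(2)}i_{q(3)}}$ with $(i_1,i_2,i_3)=(i,j,k)$, similarly with signs for alt. $\nabla S$ has components $S_{ij;k}$ (differentiation index last). Group ring elements act on order-$n$ covariant tensors by $(aT)_{i_1\ldots i_n}=\sum_q a(q)T_{i_{q(1)}\ldots i_{q(n)}}$; $a^*=\sum a(q)q^{-1}$ for $a=\sum a(q)q$; product $(p\cdot q)(i)=p(q(i))$. $(X\otimes Y)_{i_1\ldots i_5}=X_{i_1i_2}Y_{i_3i_4i_5}$ (resp. $X_{i_1i_2i_3}Y_{i_4i_5}$ when $X$ has order 3). $y_{t'}=\sum_{p\in\mathcal{H}_{t'}}\sum_{q\in\mathcal{V}_{t'}}\mathrm{sign}(q)\,p\cdot q\in\mathbb{K}[\mathcal{S}_5]$ is the Young symmetrizer of the tableau $t'$ with rows $(1,3,5)$ and $(2,4)$, where $\mathcal{H}_{t'}$, $\mathcal{V}_{t'}$ are the row- and column-preserving permutation groups of $t'$. A covariant tensor $\mathfrak{R}'$ of order 5 is an algebraic covariant derivative curvature tensor iff $\mathfrak{R}'_{ijklm}=-\mathfrak{R}'_{jiklm}=-\mathfrak{R}'_{ijlkm}=\mathfrak{R}'_{klijm}$, $\mathfrak{R}'_{ijklm}+\mathfrak{R}'_{iklj m}+\mathfrak{R}'_{iljkm}=0$, and $\mathfrak{R}'_{ijklm}+\mathfrak{R}'_{ijlmk}+\mathfrak{R}'_{ijmkl}=0$.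 *)

theory Defs
  imports Complex_Main "HOL-Combinatorics.Permutations" "HOL-Library.Function_Algebras"
begin

text \<open>Covariant tensors on the tangent space M_p, modelled on a finite index type 'n
  (components with respect to a basis).\<close>

type_synonym 'n tensor2 = "'n \<Rightarrow> 'n \<Rightarrow> real"
type_synonym 'n tensor3 = "'n \<Rightarrow> 'n \<Rightarrow> 'n \<Rightarrow> real"
type_synonym 'n tensor5 = "'n \<Rightarrow> 'n \<Rightarrow> 'n \<Rightarrow> 'n \<Rightarrow> 'n \<Rightarrow> real"

definition symmetric2 :: "'n tensor2 \<Rightarrow> bool" where
  "symmetric2 S \<longleftrightarrow> (\<forall>i j. S i j = S j i)"

definition alternating2 :: "'n tensor2 \<Rightarrow> bool" where
  "alternating2 A \<longleftrightarrow> (\<forall>i j. A i j = - A j i)"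

definition sym3 :: "'n tensor3 \<Rightarrow> 'n tensor3" where
  "sym3 X = (\<lambda>i j k. (X i j k + X j k i + X k i j + X j i k + X i k j + X k j i) / 6)"

definition alt3 :: "'n tensor3 \<Rightarrow> 'n tensor3" where
  "alt3 X = (\<lambda>i j k. (X i j k + X j k i + X k i j - X j i k - X i k j - X k j i) / 6)"

text \<open>At a point p, the values nabla S|_p of covariant derivatives of symmetric (resp. alternating)
  tensor fields S are exactly the order-3 tensors T with T_{ijk} = T_{jik} (resp. T_{ijk} = -T_{jik}),
  differentiation index last.\<close>
definition U_s :: "'n tensor3 set" where
  "U_s = {T - sym3 T | T. \<forall>i j k. T i j k = T j i k}"

definition U_a :: "'n tensor3 set" where
  "U_a = {T - alt3 T | T. \<forall>i j k. T i j k = - T j i k}"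

definition tprod23 :: "'n tensor2 \<Rightarrow> 'n tensor3 \<Rightarrow> 'n tensor5" where
  "tprod23 X Y = (\<lambda>i1 i2 i3 i4 i5. X i1 i2 * Y i3 i4 i5)"

definition tprod32 :: "'n tensor3 \<Rightarrow> 'n tensor2 \<Rightarrow> 'n tensor5" where
  "tprod32 X Y = (\<lambda>i1 i2 i3 i4 i5. X i1 i2 i3 * Y i4 i5)"

text \<open>Group ring K[S_5]: elements are coefficient functions on permutations of {1..5}.\<close>
definition S5 :: "(nat \<Rightarrow> nat) set" where
  "S5 = {q. q permutes {1..5}}"

definition tup5 :: "'n \<Rightarrow> 'n \<Rightarrow> 'n \<Rightarrow> 'n \<Rightarrow> 'n \<Rightarrow> nat \<Rightarrow> 'n" where
  "tup5 i1 i2 i3 i4 i5 k =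
     (if k = 1 then i1 else if k = 2 then i2 else if k = 3 then i3 else if k = 4 then i4 else i5)"

definition act5 :: "((nat \<Rightarrow> nat) \<Rightarrow> real) \<Rightarrow> 'n tensor5 \<Rightarrow> 'n tensor5" where
  "act5 a T = (\<lambda>i1 i2 i3 i4 i5. let ix = tup5 i1 i2 i3 i4 i5 in
     \<Sum>q\<in>S5. a q * T (ix (q 1)) (ix (q 2)) (ix (q 3)) (ix (q 4)) (ix (q 5)))"

text \<open>a^* = sum a(q) q^{-1}.\<close>
definition gstar :: "((nat \<Rightarrow> nat) \<Rightarrow> real) \<Rightarrow> ((nat \<Rightarrow> nat) \<Rightarrow> real)" where
  "gstar a = (\<lambda>r. if r \<in> S5 then a (inv r) else 0)"

text \<open>Tableau t' with rows (1,3,5), (2,4); columns (1,2), (3,4), (5).\<close>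
definition Ht :: "(nat \<Rightarrow> nat) set" where
  "Ht = {p \<in> S5. p ` {1,3,5} = {1,3,5} \<and> p ` {2,4} = {2,4}}"

definition Vt :: "(nat \<Rightarrow> nat) set" where
  "Vt = {q \<in> S5. q ` {1,2} = {1,2} \<and> q ` {3,4} = {3,4} \<and> q 5 = 5}"

text \<open>y_{t'} = sum_{p in H} sum_{q in V} sign(q) p.q, with (p.q)(i) = p(q(i)).\<close>
definition yt :: "(nat \<Rightarrow> nat) \<Rightarrow> real" where
  "yt = (\<lambda>r. \<Sum>p\<in>Ht. \<Sum>q\<in>Vt. if p \<circ> q = r then of_int (sign q) else 0)"

definition is_acdct :: "'n tensor5 \<Rightarrow> bool" where
  "is_acdct R \<longleftrightarrow>
     (\<forall>i j k l m.
        R i j k l m = - R j i k l m \<and>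
        R i j k l m = - R i j l k m \<and>
        R i j k l m = R k l i j m \<and>
        R i j k l m + R i k l j m + R i l j k m = 0 \<and>
        R i j k l m + R i j l m k + R i j m k l = 0)"

definition finsums :: "'a::monoid_add set \<Rightarrow> 'a set" where
  "finsums G = {sum_list xs | xs. set xs \<subseteq> G}"

end

theory Submission
  imports Defs
begin

definition pf :: "nat \<Rightarrow> nat \<Rightarrow> nat \<Rightarrow> nat \<Rightarrow> nat \<Rightarrow> nat \<Rightarrow> nat" where
  "pf a b c d e x = (if x=1 then a else if x=2 then b else if x=3 then c else if x=4 then d else if x=5 then e else x)"

definition pft :: "nat \<times> nat \<times> nat \<times> nat \<times> nat \<Rightarrow> nat \<Rightarrow> nat" where
  "pft t = (case t of (a,b,c,d,e) \<Rightarrow> pf a b c d e)"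

definition HTab :: "(nat \<times> nat \<times> nat \<times> nat \<times> nat) set" where
  "HTab = {(1,2,3,4,5), (1,2,5,4,3), (1,4,3,2,5), (1,4,5,2,3), (3,2,1,4,5), (3,2,5,4,1), (3,4,1,2,5), (3,4,5,2,1), (5,2,1,4,3), (5,2,3,4,1), (5,4,1,2,3), (5,4,3,2,1)}"
definition VTab :: "(nat \<times> nat \<times> nat \<times> nat \<times> nat) set" where
  "VTab = {(1,2,3,4,5), (1,2,4,3,5), (2,1,3,4,5), (2,1,4,3,5)}"

lemma atLeastAtMost15: "{1..5::nat} = {1,2,3,4,5}" by auto

lemma pft_inj: "inj pft"
proof (rule injI)
  fix s t assume st: "pft s = pft t"
  obtain a b c d e where s: "s = (a,b,c,d,e)" by (cases s) auto
  obtain a' b' c' d' e' where t: "t = (a',b',c',d',e')" by (cases t) auto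
  have "pft s 1 = pft t 1" "pft s 2 = pft t 2" "pft s 3 = pft t 3" "pft s 4 = pft t 4" "pft s 5 = pft t 5"
    using st by simp_all
  then show "s = t" unfolding s t by (simp add: pft_def pf_def)
qed

lemma pf_permutes:
  assumes "{a,b,c,d,e} = {1,2,3,4,5::nat}" "distinct [a,b,c,d,e]"
  shows "pf a b c d e permutes {1..5}"
proof (rule bij_imp_permutes)
  show "bij_betw (pf a b c d e) {1..5} {1..5}"
    unfolding atLeastAtMost15 bij_betw_def
  proof
    show "inj_on (pf a b c d e) {1, 2, 3, 4, 5}"
      using assms(2) by (auto simp: inj_on_def pf_def)
    show "pf a b c d e ` {1, 2, 3, 4, 5} = {1, 2, 3, 4, 5}"
      proof -
      have "pf a b c d e ` {1, 2, 3, 4, 5} = {a,b,c,d,e}" by (auto simp: pf_def)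
      then show ?thesis using assms(1) by simp
    qed
  qed
  show "\<And>x. x \<notin> {1..5} \<Longrightarrow> pf a b c d e x = x" by (auto simp: pf_def)
qed

lemma S5_pf: "p \<in> S5 \<Longrightarrow> p = pf (p 1) (p 2) (p 3) (p 4) (p 5)"
  unfolding S5_def
  by (rule ext) (auto simp: pf_def permutes_not_in)


definition P3 :: "(nat \<times> nat \<times> nat) set" where "P3 = {(1,3,5),(1,5,3),(3,1,5),(3,5,1),(5,1,3),(5,3,1)}"

lemma P3_mem:
  assumes "a \<in> {1,3,5}" "c \<in> {1,3,5}" "e \<in> {1,3,5}" 
    "a \<noteq> c" "a \<noteq> e" "c \<noteq> e"
  shows "(a,c,e) \<in> P3"
proof -
  have "a=1 \<or> a=3 \<or> a=5" "c=1 \<or> c=3 \<or> c=5" "e=1 \<or> e=3 \<or> e=5"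
    using assms(1-3) by auto
  then show ?thesis using assms(4-6) unfolding P3_def
    by (elim disjE; simp)
qed

lemma HTab_mem:
  assumes "a \<in> {1,3,5}" "c \<in> {1,3,5}" "e \<in> {1,3,5}" "b \<in> {2,4}" "d \<in> {2,4}"
    "a \<noteq> c" "a \<noteq> e" "c \<noteq> e" "b \<noteq> d"
  shows "(a,b,c,d,e) \<in> HTab"
proof -
  have "(a,c,e) \<in> P3" using P3_mem assms by blast
  then have "(a,c,e) = (1,3,5) \<or> (a,c,e) = (1,5,3) \<or> (a,c,e) = (3,1,5) \<or> (a,c,e) = (3,5,1) \<or> (a,c,e) = (5,1,3) \<or> (a,c,e) = (5,3,1)"
    unfolding P3_def by blast
  moreover have "(b,d) = (2,4) \<or> (b,d) = (4,2)" using assms(4,5,9) by auto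
  ultimately show ?thesis unfolding HTab_def
    by (elim disjE; simp)
qed

lemma Ht_sub: "Ht \<subseteq> pft ` HTab"
  proof
    fix p assume p: "p \<in> Ht"
    then have S: "p \<in> S5" and A: "p ` {1,3,5} = {1,3,5}" and B: "p ` {2,4} = {2,4}" by (auto simp: Ht_def)
    have inj: "inj p" using S unfolding S5_def by (simp add: permutes_inj)
    have "p 1 \<in> p ` {1,3,5}" "p 3 \<in> p ` {1,3,5}" "p 5 \<in> p ` {1,3,5}" "p 2 \<in> p ` {2,4}" "p 4 \<in> p ` {2,4}"
      by simp_all
    then have "p 1 \<in> {1,3,5}" "p 3 \<in> {1,3,5}" "p 5 \<in> {1,3,5}" "p 2 \<in> {2,4}" "p 4 \<in> {2,4}"
      unfolding A B by simp_all
    moreover have "p 1 \<noteq> p 3" "p 1 \<noteq> p 5" "p 3 \<noteq> p 5" "p 2 \<noteq> p 4"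
      by (simp_all add: inj_eq[OF inj])
    ultimately have "(p 1, p 2, p 3, p 4, p 5) \<in> HTab"
      by (rule HTab_mem)
    moreover have "p = pft (p 1, p 2, p 3, p 4, p 5)" using S5_pf[OF S] by (simp add: pft_def)
    ultimately show "p \<in> pft ` HTab" by blast
  qed

lemma pf_Ht:
  assumes "{a,c,e} = {1,3,5::nat}" "{b,d} = {2,4::nat}" "distinct [a,b,c,d,e]"
  shows "pf a b c d e \<in> Ht"
proof -
  have "{a,b,c,d,e} = {a,c,e} \<union> {b,d}" by auto
  also have "\<dots> = {1,2,3,4,5}" unfolding assms(1,2) by auto
  finally have "pf a b c d e permutes {1..5}" using pf_permutes assms(3) by blast
  moreover have "pf a b c d e ` {1,3,5} = {a,c,e}" "pf a b c d e ` {2,4} = {b,d}" by (auto simp: pf_def)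
  ultimately show ?thesis unfolding Ht_def S5_def using assms(1,2) by simp
qed

lemma Ht_eq: "Ht = pft ` HTab"
proof
  show "Ht \<subseteq> pft ` HTab" by (rule Ht_sub)
  show "pft ` HTab \<subseteq> Ht"
  proof
    fix p assume "p \<in> pft ` HTab"
    then obtain t where t: "t \<in> HTab" "p = pft t" by blast
    from t(1) show "p \<in> Ht" unfolding t(2) HTab_def
      by (auto simp: pft_def intro!: pf_Ht)
  qed
qed

lemma pf_Vt:
  assumes "{a,b} = {1,2::nat}" "{c,d} = {3,4::nat}" "distinct [a,b,c,d]"
  shows "pf a b c d 5 \<in> Vt"
proof -
  have s: "{a,b,c,d,5} = {1,2,3,4,5}"
  proof -
    have "{a,b,c,d,5} = {a,b} \<union> {c,d} \<union> {5}" by auto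
    also have "\<dots> = {1,2,3,4,5}" unfolding assms(1,2) by auto
    finally show ?thesis .
  qed
  have "a \<in> {1,2}" "b \<in> {1,2}" "c \<in> {3,4}" "d \<in> {3,4}" using assms(1,2) by blast+
  then have "distinct [a,b,c,d,5]" using assms(3) by auto
  then have "pf a b c d 5 permutes {1..5}" using pf_permutes s by blast
  moreover have "pf a b c d 5 ` {1,2} = {a,b}" "pf a b c d 5 ` {3,4} = {c,d}" by (auto simp: pf_def)
  ultimately show ?thesis unfolding Vt_def S5_def using assms(1,2) by (simp add: pf_def)
qed

lemma Vt_eq: "Vt = pft ` VTab"
proof
  show "Vt \<subseteq> pft ` VTab"
  proof
    fix p assume p: "p \<in> Vt"
    then have S: "p \<in> S5" and A: "p ` {1,2} = {1,2}" and B: "p ` {3,4} = {3,4}" and C: "p 5 = 5" by (auto simp: Vt_def)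
    have inj: "inj p" using S unfolding S5_def by (simp add: permutes_inj)
    have "p 1 \<in> p ` {1,2}" "p 2 \<in> p ` {1,2}" "p 3 \<in> p ` {3,4}" "p 4 \<in> p ` {3,4}"
      by simp_all
    then have "p 1 \<in> {1,2}" "p 2 \<in> {1,2}" "p 3 \<in> {3,4}" "p 4 \<in> {3,4}"
      unfolding A B by simp_all
    moreover have "p 1 \<noteq> p 2" "p 3 \<noteq> p 4"
      by (simp_all add: inj_eq[OF inj])
    ultimately have "(p 1, p 2) = (1,2) \<or> (p 1, p 2) = (2,1)" "(p 3, p 4) = (3,4) \<or> (p 3, p 4) = (4,3)"
      by auto
    then have "(p 1, p 2, p 3, p 4, p 5) \<in> VTab"
      unfolding VTab_def using C by (elim disjE; simp)
    moreover have "p = pft (p 1, p 2, p 3, p 4, p 5)" using S5_pf[OF S] by (simp add: pft_def)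
    ultimately show "p \<in> pft ` VTab" by blast
  qed
  show "pft ` VTab \<subseteq> Vt"
  proof
    fix p assume "p \<in> pft ` VTab"
    then obtain t where t: "t \<in> VTab" "p = pft t" by blast
    from t(1) show "p \<in> Vt" unfolding t(2) VTab_def
      by (auto simp: pft_def intro!: pf_Vt)
  qed
qed

lemma Ht_S5: "p \<in> Ht \<Longrightarrow> p \<in> S5" by (simp add: Ht_def)
lemma Vt_S5: "p \<in> Vt \<Longrightarrow> p \<in> S5" by (simp add: Vt_def)
lemma S5_bij: "p \<in> S5 \<Longrightarrow> bij p" by (simp add: S5_def permutes_bij)
lemma S5_inv: "p \<in> S5 \<Longrightarrow> inv p \<in> S5" by (simp add: S5_def permutes_inv)
lemma S5_comp: "p \<in> S5 \<Longrightarrow> q \<in> S5 \<Longrightarrow> p \<circ> q \<in> S5" by (simp add: S5_def permutes_compose)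
lemma S5_perm: "p \<in> S5 \<Longrightarrow> permutation p"
  unfolding S5_def permutation_permutes by auto

lemma finite_S5: "finite S5"
  unfolding S5_def by (simp add: finite_permutations)

lemma inv_image_same: "bij p \<Longrightarrow> p ` A = A \<Longrightarrow> inv p ` A = A"
  by (metis bij_is_inj image_inv_f_f)

lemma Ht_inv: "p \<in> Ht \<Longrightarrow> inv p \<in> Ht"
proof -
  assume p: "p \<in> Ht"
  then have S: "p \<in> S5" and A: "p ` {1,3,5} = {1,3,5}" and B: "p ` {2,4} = {2,4}" by (auto simp: Ht_def)
  have b: "bij p" using S by (rule S5_bij)
  show ?thesis unfolding Ht_def using S5_inv[OF S] inv_image_same[OF b A] inv_image_same[OF b B] by blast
qed

lemma Vt_inv: "p \<in> Vt \<Longrightarrow> inv p \<in> Vt"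
proof -
  assume p: "p \<in> Vt"
  then have S: "p \<in> S5" and A: "p ` {1,2} = {1,2}" and B: "p ` {3,4} = {3,4}" and C: "p 5 = 5" by (auto simp: Vt_def)
  have b: "bij p" using S by (rule S5_bij)
  have "inv p 5 = 5" using C b by (simp add: bij_is_inj inv_f_eq)
  then show ?thesis unfolding Vt_def using S5_inv[OF S] inv_image_same[OF b A] inv_image_same[OF b B] by blast
qed

lemma sum_inv_reindex:
  assumes "\<And>p. p \<in> A \<Longrightarrow> inv p \<in> A" "\<And>p. p \<in> A \<Longrightarrow> bij p"
  shows "(\<Sum>p\<in>A. G (inv p)) = (\<Sum>p\<in>A. G p)"
proof (rule sum.reindex_bij_witness[of _ inv inv])
  fix a assume a: "a \<in> A"
  show "inv (inv a) = a" by (simp add: a assms(2) inv_inv_eq)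
  show "inv a \<in> A" by (simp add: a assms(1))
  show "G (inv a) = G (inv a)" by (rule refl)
next
  fix a assume a: "a \<in> A"
  show "inv (inv a) = a" by (simp add: a assms(2) inv_inv_eq)
  show "inv a \<in> A" by (simp add: a assms(1))
qed

lemma gstar_sum:
  "(\<Sum>r\<in>S5. gstar yt r * F r) = (\<Sum>p\<in>Ht. \<Sum>q\<in>Vt. of_int (sign q) * F (q \<circ> p))"
proof -
  have "(\<Sum>r\<in>S5. gstar yt r * F r) = (\<Sum>r\<in>S5. \<Sum>p\<in>Ht. \<Sum>q\<in>Vt. (if p \<circ> q = inv r then of_int (sign q) else 0) * F r)"
    by (rule sum.cong) (auto simp: gstar_def yt_def sum_distrib_right)
  also have "\<dots> = (\<Sum>p\<in>Ht. \<Sum>q\<in>Vt. \<Sum>r\<in>S5. (if r = inv (p \<circ> q) then of_int (sign q) * F r else 0))"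
  proof -
    have "\<And>r p q. r \<in> S5 \<Longrightarrow> p \<in> Ht \<Longrightarrow> q \<in> Vt \<Longrightarrow> (p \<circ> q = inv r) = (r = inv (p \<circ> q))"
      by (metis Ht_S5 Vt_S5 S5_bij S5_comp inv_inv_eq)
    then have "(\<Sum>r\<in>S5. \<Sum>p\<in>Ht. \<Sum>q\<in>Vt. (if p \<circ> q = inv r then of_int (sign q) else 0) * F r)
      = (\<Sum>r\<in>S5. \<Sum>p\<in>Ht. \<Sum>q\<in>Vt. (if r = inv (p \<circ> q) then of_int (sign q) * F r else 0))"
      by (intro sum.cong refl) auto
    also have "\<dots> = (\<Sum>p\<in>Ht. \<Sum>q\<in>Vt. \<Sum>r\<in>S5. (if r = inv (p \<circ> q) then of_int (sign q) * F r else 0))"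
      by (simp add: sum.swap[of _ S5] sum.swap[of _ S5 Vt])
    finally show ?thesis .
  qed
  also have "\<dots> = (\<Sum>p\<in>Ht. \<Sum>q\<in>Vt. of_int (sign q) * F (inv q \<circ> inv p))"
  proof (intro sum.cong refl)
    fix p q assume p: "p \<in> Ht" and q: "q \<in> Vt"
    have "inv (p \<circ> q) \<in> S5" by (simp add: Ht_S5 S5_comp S5_inv Vt_S5 p q)
    moreover have "inv (p \<circ> q) = inv q \<circ> inv p"
      by (simp add: Ht_S5 S5_bij Vt_S5 o_inv_distrib p q)
    ultimately show "(\<Sum>r\<in>S5. (if r = inv (p \<circ> q) then of_int (sign q) * F r else 0)) = of_int (sign q) * F (inv q \<circ> inv p)"
      by (simp add: sum.delta finite_S5)
  qed
  also have "\<dots> = (\<Sum>p\<in>Ht. \<Sum>q\<in>Vt. of_int (sign q) * F (q \<circ> inv p))"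
  proof (rule sum.cong[OF refl])
    fix p assume "p \<in> Ht"
    have "(\<Sum>q\<in>Vt. of_int (sign q) * F (inv q \<circ> inv p)) = (\<Sum>q\<in>Vt. of_int (sign (inv q)) * F (inv q \<circ> inv p))"
      by (intro sum.cong refl) (simp add: sign_inverse S5_perm Vt_S5)
    also have "\<dots> = (\<Sum>q\<in>Vt. of_int (sign q) * F (q \<circ> inv p))"
      by (rule sum_inv_reindex[where G = "\<lambda>q. of_int (sign q) * F (q \<circ> inv p)"]) (auto simp: Vt_inv S5_bij Vt_S5)
    finally show "(\<Sum>q\<in>Vt. of_int (sign q) * F (inv q \<circ> inv p)) = (\<Sum>q\<in>Vt. of_int (sign q) * F (q \<circ> inv p))" .
  qed
  also have "\<dots> = (\<Sum>p\<in>Ht. \<Sum>q\<in>Vt. of_int (sign q) * F (q \<circ> p))"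
    by (rule sum_inv_reindex[where G = "\<lambda>p. \<Sum>q\<in>Vt. of_int (sign q) * F (q \<circ> p)"]) (auto simp: Ht_inv S5_bij Ht_S5)
  finally show ?thesis .
qed

lemma sign_tab:
  "sign (pf 1 2 3 4 5) = 1" "sign (pf 1 2 4 3 5) = -1" "sign (pf 2 1 3 4 5) = -1" "sign (pf 2 1 4 3 5) = 1"
proof -
  have e1: "pf 1 2 3 4 5 = id" by (rule ext) (simp add: pf_def)
  have e2: "pf 1 2 4 3 5 = transpose 3 4" by (rule ext) (simp add: pf_def transpose_def)
  have e3: "pf 2 1 3 4 5 = transpose 1 2" by (rule ext) (simp add: pf_def transpose_def)
  have e4: "pf 2 1 4 3 5 = transpose 1 2 \<circ> transpose 3 4" by (rule ext) (simp add: pf_def transpose_def)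
  show "sign (pf 1 2 3 4 5) = 1" unfolding e1 by simp
  show "sign (pf 1 2 4 3 5) = -1" unfolding e2 by (simp add: sign_swap_id)
  show "sign (pf 2 1 3 4 5) = -1" unfolding e3 by (simp add: sign_swap_id)
  show "sign (pf 2 1 4 3 5) = 1" unfolding e4 by (simp add: sign_compose sign_swap_id permutation_swap_id)
qed

lemma gstar_sum_tab:
  "(\<Sum>r\<in>S5. gstar yt r * F r) = (\<Sum>t\<in>HTab. \<Sum>s\<in>VTab. of_int (sign (pft s)) * F (pft s \<circ> pft t))"
  unfolding gstar_sum Ht_eq Vt_eq
  by (simp add: sum.reindex inj_on_subset[OF pft_inj])

definition Yf :: "'n tensor5 \<Rightarrow> 'n tensor5" where
  "Yf T = (\<lambda>i1 i2 i3 i4 i5. (T i1 i2 i3 i4 i5) - (T i1 i2 i4 i3 i5) - (T i2 i1 i3 i4 i5) + (T i2 i1 i4 i3 i5) + (T i1 i2 i5 i4 i3) - (T i1 i2 i5 i3 i4) - (T i2 i1 i5 i4 i3) + (T i2 i1 i5 i3 i4) + (T i1 i4 i3 i2 i5) - (T i1 i3 i4 i2 i5) - (T i2 i4 i3 i1 i5) + (T i2 i3 i4 i1 i5) + (T i1 i4 i5 i2 i3) - (T i1 i3 i5 i2 i4) - (T i2 i4 i5 i1 i3) + (T i2 i3 i5 i1 i4) + (T i3 i2 i1 i4 i5) - (T i4 i2 i1 i3 i5) - (T i3 i1 i2 i4 i5) + (T i4 i1 i2 i3 i5) + (T i3 i2 i5 i4 i1) - (T i4 i2 i5 i3 i1)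 - (T i3 i1 i5 i4 i2) + (T i4 i1 i5 i3 i2) + (T i3 i4 i1 i2 i5) - (T i4 i3 i1 i2 i5) - (T i3 i4 i2 i1 i5) + (T i4 i3 i2 i1 i5) + (T i3 i4 i5 i2 i1) - (T i4 i3 i5 i2 i1) - (T i3 i4 i5 i1 i2) + (T i4 i3 i5 i1 i2) + (T i5 i2 i1 i4 i3) - (T i5 i2 i1 i3 i4) - (T i5 i1 i2 i4 i3) + (T i5 i1 i2 i3 i4) + (T i5 i2 i3 i4 i1) - (T i5 i2 i4 i3 i1) - (T i5 i1 i3 i4 i2) + (T i5 i1 i4 i3 i2) + (T i5 i4 i1 i2 i3) - (T i5 i3 i1 i2 i4) - (T i5 i4 i2 i1 i3) + (T i5 i3 i2 i1 i4) + (T i5 i4 i3 i2 i1) - (T i5 i3 i4 i2 i1) - (T i5 i4 i3 i1 i2) + (T i5 i3 i4 i1 i2))"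

lemma sign_tab':
  "sign (pf (Suc 0) 2 3 4 5) = 1" "sign (pf (Suc 0) 2 4 3 5) = -1" "sign (pf 2 (Suc 0) 3 4 5) = -1" "sign (pf 2 (Suc 0) 4 3 5) = 1"
  using sign_tab by simp_all

lemma Yexp: "act5 (gstar yt) T = Yf T"
proof (intro ext)
  fix i1 i2 i3 i4 i5
  show "act5 (gstar yt) T i1 i2 i3 i4 i5 = Yf T i1 i2 i3 i4 i5"
    unfolding act5_def Let_def gstar_sum_tab
    by (simp add: HTab_def VTab_def pft_def sign_tab sign_tab' pf_def tup5_def Yf_def)
qed

lemma acdct_nf:
  fixes R :: "('n::finite) tensor5"
  assumes "is_acdct R"
  shows
    "R j i k l m = - (R i j k l m)"
    "R i j l k m = - (R i j k l m)"
    "R k l i j m = (R i j k l m)"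
    "R j i k m l = - (R i j k m l)"
    "R i j m k l = - (R i j k m l)"
    "R k m i j l = (R i j k m l)"
    "R i j m l k = - (R i j k m l) + (R i j k l m)"
    "R j i l k m = (R i j k l m)"
    "R l k i j m = - (R i j k l m)"
    "R i l k j m = (R i j k l m) - (R i k j l m)"
    "R i j l m k = (R i j k m l) - (R i j k l m)"
    "R l m i j k = (R i j k m l) - (R i j k l m)"
    "R j i m k l = (R i j k m l)"
    "R m k i j l = - (R i j k m l)"
    "R i m k j l = (R i j k m l) - (R i k j m l)"
    "R j i m l k = (R i j k m l) - (R i j k l m)"
    "R m l i j k = - (R i j k m l) + (R i j k l m)"
    "R i m l j k = (R i j k m l) - (R i j k l m) - (R i l j m k)"
    "R k i j l m = - (R i k j l m)"
    "R i k l j m = - (R i k j l m)"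
    "R j l i k m = (R i k j l m)"
    "R k i j m l = - (R i k j m l)"
    "R i k m j l = - (R i k j m l)"
    "R j m i k l = (R i k j m l)"
    "R i k m l j = - (R i k j m l) + (R i k j l m)"
    "R k i l j m = (R i k j l m)"
    "R l j i k m = - (R i k j l m)"
    "R i l j k m = (R i k j l m) - (R i j k l m)"
    "R i k l m j = (R i k j m l) - (R i k j l m)"
    "R l m i k j = (R i k j m l) - (R i k j l m)"
    "R k i m j l = (R i k j m l)"
    "R m j i k l = - (R i k j m l)"
    "R i m j k l = (R i k j m l) - (R i j k m l)"
    "R k i m l j = (R i k j m l) - (R i k j l m)"
    "R m l i k j = - (R i k j m l) + (R i k j l m)"
    "R l i j k m = - (R i k j l m) + (R i j k l m)"
    "R j k i l m = (R i k j l m) - (R i j k l m)"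
    "R l i j m k = - (R i l j m k)"
    "R i l m j k = - (R i l j m k)"
    "R j m i l k = (R i l j m k)"
    "R i l m k j = - (R i l j m k) - (R i j k l m) + (R i k j l m)"
    "R l i k j m = - (R i j k l m) + (R i k j l m)"
    "R k j i l m = (R i j k l m) - (R i k j l m)"
    "R i l k m j = (R i l j m k) + (R i j k l m) - (R i k j l m)"
    "R k m i l j = (R i l j m k) + (R i j k l m) - (R i k j l m)"
    "R i m l k j = - (R i l j m k) - (R i j k l m) + (R i k j m l)"
    "R l i m j k = (R i l j m k)"
    "R m j i l k = - (R i l j m k)"
    "R i m j l k = (R i l j m k) - (R i j k m l) + (R i j k l m)"
    "R l i m k j = (R i l j m k) + (R i j k l m) - (R i k j l m)"
    "R m k i l j = - (R i l j m k) - (R i j k l m) + (R i k j l m)"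
    "R i m k l j = (R i l j m k) + (R i j k l m) - (R i k j m l)"
    "R m i j k l = - (R i k j m l) + (R i j k m l)"
    "R j k i m l = (R i k j m l) - (R i j k m l)"
    "R m i j l k = - (R i l j m k) + (R i j k m l) - (R i j k l m)"
    "R j l i m k = (R i l j m k) - (R i j k m l) + (R i j k l m)"
    "R m i k j l = - (R i j k m l) + (R i k j m l)"
    "R k j i m l = (R i j k m l) - (R i k j m l)"
    "R m i k l j = - (R i l j m k) - (R i j k l m) + (R i k j m l)"
    "R k l i m j = (R i l j m k) + (R i j k l m) - (R i k j m l)"
    "R m i l j k = - (R i j k m l) + (R i j k l m) + (R i l j m k)"
    "R l j i m k = (R i j k m l) - (R i j k l m) - (R i l j m k)"
    "R m i l k j = (R i l j m k) + (R i j k l m) - (R i k j m l)"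
    "R l k i m j = - (R i l j m k) - (R i j k l m) + (R i k j m l)"
    "R k l j i m = - (R i j k l m)"
    "R j k l i m = (R i j k l m) - (R i k j l m)"
    "R j i l m k = (R i j k l m) - (R i j k m l)"
    "R k m j i l = - (R i j k m l)"
    "R j k m i l = (R i j k m l) - (R i k j m l)"
    "R l k j i m = (R i j k l m)"
    "R j l k i m = - (R i k j l m)"
    "R l m j i k = (R i j k l m) - (R i j k m l)"
    "R j l m i k = - (R i j k l m) + (R i j k m l) - (R i l j m k)"
    "R m k j i l = (R i j k m l)"
    "R j m k i l = - (R i k j m l)"
    "R m l j i k = (R i j k m l) - (R i j k l m)"
    "R j m l i k = - (R i l j m k)"
    "R j k l m i = - (R i k j l m) + (R i j k l m) - (R i j k m l) + (R i k j m l)"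
    "R j k m l i = - (R i k j m l) + (R i j k m l) - (R i j k l m) + (R i k j l m)"
    "R k j l i m = - (R i j k l m) + (R i k j l m)"
    "R k j l m i = (R i k j l m) - (R i j k l m) + (R i j k m l) - (R i k j m l)"
    "R l m j k i = - (R i k j l m) + (R i j k l m) - (R i j k m l) + (R i k j m l)"
    "R k j m i l = - (R i j k m l) + (R i k j m l)"
    "R k j m l i = (R i k j m l) - (R i j k m l) + (R i j k l m) - (R i k j l m)"
    "R m l j k i = - (R i k j m l) + (R i j k m l) - (R i j k l m) + (R i k j l m)"
    "R j l k m i = - (R i k j l m) + (R i j k l m) - (R i j k m l) + (R i l j m k)"
    "R j l m k i = - (R i l j m k) + (R i j k m l) - (R i j k l m) + (R i k j l m)"
    "R l j k i m = (R i k j l m)"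
    "R l j k m i = (R i k j l m) - (R i j k l m) + (R i j k m l) - (R i l j m k)"
    "R k m j l i = - (R i k j l m) + (R i j k l m) - (R i j k m l) + (R i l j m k)"
    "R j m l k i = - (R i l j m k) + (R i k j m l)"
    "R l j m i k = (R i j k l m) - (R i j k m l) + (R i l j m k)"
    "R l j m k i = (R i l j m k) - (R i j k m l) + (R i j k l m) - (R i k j l m)"
    "R m k j l i = - (R i l j m k) + (R i j k m l) - (R i j k l m) + (R i k j l m)"
    "R j m k l i = (R i l j m k) - (R i k j m l)"
    "R m j k i l = (R i k j m l)"
    "R m j k l i = - (R i l j m k) + (R i k j m l)"
    "R k l j m i = (R i l j m k) - (R i k j m l)"
    "R m j l i k = (R i l j m k)"
    "R m j l k i = (R i l j m k) - (R i k j m l)"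
    "R l k j m i = - (R i l j m k) + (R i k j m l)"
    "R k i l m j = (R i k j l m) - (R i k j m l)"
    "R l m k i j = (R i k j l m) - (R i k j m l)"
    "R k l m i j = (R i k j m l) - (R i l j m k) - (R i j k l m)"
    "R m l k i j = (R i k j m l) - (R i k j l m)"
    "R k m l i j = (R i k j l m) - (R i l j m k) - (R i j k l m)"
    "R l m k j i = (R i k j l m) - (R i j k l m) + (R i j k m l) - (R i k j m l)"
    "R k l m j i = (R i k j m l) - (R i l j m k)"
    "R m l k j i = (R i k j m l) - (R i j k m l) + (R i j k l m) - (R i k j l m)"
    "R k m l j i = (R i j k m l) - (R i j k l m) + (R i k j l m) - (R i l j m k)"
    "R l k m i j = - (R i k j m l) + (R i l j m k) + (R i j k l m)"
    "R l k m j i = - (R i k j m l) + (R i l j m k)"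
    "R m k l i j = - (R i k j l m) + (R i l j m k) + (R i j k l m)"
    "R l i k m j = (R i k j l m) - (R i l j m k) - (R i j k l m)"
    "R m k l j i = - (R i j k m l) + (R i j k l m) - (R i k j l m) + (R i l j m k)"
proof -
  have A1: "\<And>i j k l m. R i j k l m = - R j i k l m" and A2: "\<And>i j k l m. R i j k l m = - R i j l k m"
   and A3: "\<And>i j k l m. R i j k l m = R k l i j m" and A4: "\<And>i j k l m. R i j k l m + R i k l j m + R i l j k m = 0"
   and A5: "\<And>i j k l m. R i j k l m + R i j l m k + R i j m k l = 0"
    using assms unfolding is_acdct_def by blast+
  have e0: "R j i k l m = - (R i j k l m)"
    using A1[of i j k l m]  by linarith
  have e1: "R i j l k m = - (R i j k l m)"
    using A2[of i j k l m]  by linarith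
  have e2: "R k l i j m = (R i j k l m)"
    using A3[of i j k l m]  by linarith
  have e3: "R j i k m l = - (R i j k m l)"
    using A1[of i j k m l]  by linarith
  have e4: "R i j m k l = - (R i j k m l)"
    using A2[of i j k m l]  by linarith
  have e5: "R k m i j l = (R i j k m l)"
    using A3[of i j k m l]  by linarith
  have e6: "R i j m l k = - (R i j k m l) + (R i j k l m)"
    using A5[of i j k m l] e1 by linarith
  have e7: "R j i l k m = (R i j k l m)"
    using A1[of i j l k m] e1 by linarith
  have e8: "R l k i j m = - (R i j k l m)"
    using A3[of i j l k m] e1 by linarith
  have e9: "R i l k j m = (R i j k l m) - (R i k j l m)"
    using A4[of i j l k m] e1 by linarith
  have e10: "R i j l m k = (R i j k m l) - (R i j k l m)"
    using A2[of i j l m k] e6 by linarith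
  have e11: "R l m i j k = (R i j k m l) - (R i j k l m)"
    using A3[of i j l m k] e10 by linarith
  have e12: "R j i m k l = (R i j k m l)"
    using A1[of i j m k l] e4 by linarith
  have e13: "R m k i j l = - (R i j k m l)"
    using A3[of i j m k l] e4 by linarith
  have e14: "R i m k j l = (R i j k m l) - (R i k j m l)"
    using A4[of i j m k l] e4 by linarith
  have e15: "R j i m l k = (R i j k m l) - (R i j k l m)"
    using A1[of i j m l k] e6 by linarith
  have e16: "R m l i j k = - (R i j k m l) + (R i j k l m)"
    using A3[of i j m l k] e6 by linarith
  have e17: "R i m l j k = (R i j k m l) - (R i j k l m) - (R i l j m k)"
    using A4[of i j m l k] e6 by linarith
  have e18: "R k i j l m = - (R i k j l m)"
    using A1[of i k j l m]  by linarith
  have e19: "R i k l j m = - (R i k j l m)"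
    using A2[of i k j l m]  by linarith
  have e20: "R j l i k m = (R i k j l m)"
    using A3[of i k j l m]  by linarith
  have e21: "R k i j m l = - (R i k j m l)"
    using A1[of i k j m l]  by linarith
  have e22: "R i k m j l = - (R i k j m l)"
    using A2[of i k j m l]  by linarith
  have e23: "R j m i k l = (R i k j m l)"
    using A3[of i k j m l]  by linarith
  have e24: "R i k m l j = - (R i k j m l) + (R i k j l m)"
    using A5[of i k j m l] e19 by linarith
  have e25: "R k i l j m = (R i k j l m)"
    using A1[of i k l j m] e19 by linarith
  have e26: "R l j i k m = - (R i k j l m)"
    using A3[of i k l j m] e19 by linarith
  have e27: "R i l j k m = (R i k j l m) - (R i j k l m)"
    using A4[of i k l j m] e19 by linarith
  have e28: "R i k l m j = (R i k j m l) - (R i k j l m)"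
    using A2[of i k l m j] e24 by linarith
  have e29: "R l m i k j = (R i k j m l) - (R i k j l m)"
    using A3[of i k l m j] e28 by linarith
  have e30: "R k i m j l = (R i k j m l)"
    using A1[of i k m j l] e22 by linarith
  have e31: "R m j i k l = - (R i k j m l)"
    using A3[of i k m j l] e22 by linarith
  have e32: "R i m j k l = (R i k j m l) - (R i j k m l)"
    using A4[of i k m j l] e22 by linarith
  have e33: "R k i m l j = (R i k j m l) - (R i k j l m)"
    using A1[of i k m l j] e24 by linarith
  have e34: "R m l i k j = - (R i k j m l) + (R i k j l m)"
    using A3[of i k m l j] e24 by linarith
  have e35: "R l i j k m = - (R i k j l m) + (R i j k l m)"
    using A1[of i l j k m] e27 by linarith
  have e36: "R j k i l m = (R i k j l m) - (R i j k l m)"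
    using A3[of i l j k m] e27 by linarith
  have e37: "R l i j m k = - (R i l j m k)"
    using A1[of i l j m k]  by linarith
  have e38: "R i l m j k = - (R i l j m k)"
    using A2[of i l j m k]  by linarith
  have e39: "R j m i l k = (R i l j m k)"
    using A3[of i l j m k]  by linarith
  have e40: "R i l m k j = - (R i l j m k) - (R i j k l m) + (R i k j l m)"
    using A5[of i l j m k] e9 by linarith
  have e41: "R l i k j m = - (R i j k l m) + (R i k j l m)"
    using A1[of i l k j m] e9 by linarith
  have e42: "R k j i l m = (R i j k l m) - (R i k j l m)"
    using A3[of i l k j m] e9 by linarith
  have e43: "R i l k m j = (R i l j m k) + (R i j k l m) - (R i k j l m)"
    using A2[of i l k m j] e40 by linarith
  have e44: "R k m i l j = (R i l j m k) + (R i j k l m) - (R i k j l m)"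
    using A3[of i l k m j] e43 by linarith
  have e45: "R i m l k j = - (R i l j m k) - (R i j k l m) + (R i k j m l)"
    using A4[of i l k m j] e43 e24 by linarith
  have e46: "R l i m j k = (R i l j m k)"
    using A1[of i l m j k] e38 by linarith
  have e47: "R m j i l k = - (R i l j m k)"
    using A3[of i l m j k] e38 by linarith
  have e48: "R i m j l k = (R i l j m k) - (R i j k m l) + (R i j k l m)"
    using A4[of i l m j k] e38 e10 by linarith
  have e49: "R l i m k j = (R i l j m k) + (R i j k l m) - (R i k j l m)"
    using A1[of i l m k j] e40 by linarith
  have e50: "R m k i l j = - (R i l j m k) - (R i j k l m) + (R i k j l m)"
    using A3[of i l m k j] e40 by linarith
  have e51: "R i m k l j = (R i l j m k) + (R i j k l m) - (R i k j m l)"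
    using A4[of i l m k j] e40 e28 by linarith
  have e52: "R m i j k l = - (R i k j m l) + (R i j k m l)"
    using A1[of i m j k l] e32 by linarith
  have e53: "R j k i m l = (R i k j m l) - (R i j k m l)"
    using A3[of i m j k l] e32 by linarith
  have e54: "R m i j l k = - (R i l j m k) + (R i j k m l) - (R i j k l m)"
    using A1[of i m j l k] e48 by linarith
  have e55: "R j l i m k = (R i l j m k) - (R i j k m l) + (R i j k l m)"
    using A3[of i m j l k] e48 by linarith
  have e56: "R m i k j l = - (R i j k m l) + (R i k j m l)"
    using A1[of i m k j l] e14 by linarith
  have e57: "R k j i m l = (R i j k m l) - (R i k j m l)"
    using A3[of i m k j l] e14 by linarith
  have e58: "R m i k l j = - (R i l j m k) - (R i j k l m) + (R i k j m l)"
    using A1[of i m k l j] e51 by linarith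
  have e59: "R k l i m j = (R i l j m k) + (R i j k l m) - (R i k j m l)"
    using A3[of i m k l j] e51 by linarith
  have e60: "R m i l j k = - (R i j k m l) + (R i j k l m) + (R i l j m k)"
    using A1[of i m l j k] e17 by linarith
  have e61: "R l j i m k = (R i j k m l) - (R i j k l m) - (R i l j m k)"
    using A3[of i m l j k] e17 by linarith
  have e62: "R m i l k j = (R i l j m k) + (R i j k l m) - (R i k j m l)"
    using A1[of i m l k j] e45 by linarith
  have e63: "R l k i m j = - (R i l j m k) - (R i j k l m) + (R i k j m l)"
    using A3[of i m l k j] e45 by linarith
  have e64: "R k l j i m = - (R i j k l m)"
    using A3[of j i k l m] e0 by linarith
  have e65: "R j k l i m = (R i j k l m) - (R i k j l m)"
    using A4[of j i k l m] e0 e20 by linarith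
  have e66: "R j i l m k = (R i j k l m) - (R i j k m l)"
    using A5[of j i k l m] e0 e12 by linarith
  have e67: "R k m j i l = - (R i j k m l)"
    using A3[of j i k m l] e3 by linarith
  have e68: "R j k m i l = (R i j k m l) - (R i k j m l)"
    using A4[of j i k m l] e3 e23 by linarith
  have e69: "R l k j i m = (R i j k l m)"
    using A3[of j i l k m] e7 by linarith
  have e70: "R j l k i m = - (R i k j l m)"
    using A4[of j i l k m] e7 e36 by linarith
  have e71: "R l m j i k = (R i j k l m) - (R i j k m l)"
    using A3[of j i l m k] e66 by linarith
  have e72: "R j l m i k = - (R i j k l m) + (R i j k m l) - (R i l j m k)"
    using A4[of j i l m k] e66 e39 by linarith
  have e73: "R m k j i l = (R i j k m l)"
    using A3[of j i m k l] e12 by linarith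
  have e74: "R j m k i l = - (R i k j m l)"
    using A4[of j i m k l] e12 e53 by linarith
  have e75: "R m l j i k = (R i j k m l) - (R i j k l m)"
    using A3[of j i m l k] e15 by linarith
  have e76: "R j m l i k = - (R i l j m k)"
    using A4[of j i m l k] e15 e55 by linarith
  have e77: "R j k l m i = - (R i k j l m) + (R i j k l m) - (R i j k m l) + (R i k j m l)"
    using A5[of j k i l m] e36 e68 by linarith
  have e78: "R j k m l i = - (R i k j m l) + (R i j k m l) - (R i j k l m) + (R i k j l m)"
    using A5[of j k i m l] e53 e65 by linarith
  have e79: "R k j l i m = - (R i j k l m) + (R i k j l m)"
    using A1[of j k l i m] e65 by linarith
  have e80: "R k j l m i = (R i k j l m) - (R i j k l m) + (R i j k m l) - (R i k j m l)"
    using A1[of j k l m i] e77 by linarith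
  have e81: "R l m j k i = - (R i k j l m) + (R i j k l m) - (R i j k m l) + (R i k j m l)"
    using A3[of j k l m i] e77 by linarith
  have e82: "R k j m i l = - (R i j k m l) + (R i k j m l)"
    using A1[of j k m i l] e68 by linarith
  have e83: "R k j m l i = (R i k j m l) - (R i j k m l) + (R i j k l m) - (R i k j l m)"
    using A1[of j k m l i] e78 by linarith
  have e84: "R m l j k i = - (R i k j m l) + (R i j k m l) - (R i j k l m) + (R i k j l m)"
    using A3[of j k m l i] e78 by linarith
  have e85: "R j l k m i = - (R i k j l m) + (R i j k l m) - (R i j k m l) + (R i l j m k)"
    using A5[of j l i k m] e20 e72 by linarith
  have e86: "R j l m k i = - (R i l j m k) + (R i j k m l) - (R i j k l m) + (R i k j l m)"
    using A5[of j l i m k] e55 e70 by linarith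
  have e87: "R l j k i m = (R i k j l m)"
    using A1[of j l k i m] e70 by linarith
  have e88: "R l j k m i = (R i k j l m) - (R i j k l m) + (R i j k m l) - (R i l j m k)"
    using A1[of j l k m i] e85 by linarith
  have e89: "R k m j l i = - (R i k j l m) + (R i j k l m) - (R i j k m l) + (R i l j m k)"
    using A3[of j l k m i] e85 by linarith
  have e90: "R j m l k i = - (R i l j m k) + (R i k j m l)"
    using A4[of j l k m i] e85 e78 by linarith
  have e91: "R l j m i k = (R i j k l m) - (R i j k m l) + (R i l j m k)"
    using A1[of j l m i k] e72 by linarith
  have e92: "R l j m k i = (R i l j m k) - (R i j k m l) + (R i j k l m) - (R i k j l m)"
    using A1[of j l m k i] e86 by linarith
  have e93: "R m k j l i = - (R i l j m k) + (R i j k m l) - (R i j k l m) + (R i k j l m)"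
    using A3[of j l m k i] e86 by linarith
  have e94: "R j m k l i = (R i l j m k) - (R i k j m l)"
    using A4[of j l m k i] e86 e77 by linarith
  have e95: "R m j k i l = (R i k j m l)"
    using A1[of j m k i l] e74 by linarith
  have e96: "R m j k l i = - (R i l j m k) + (R i k j m l)"
    using A1[of j m k l i] e94 by linarith
  have e97: "R k l j m i = (R i l j m k) - (R i k j m l)"
    using A3[of j m k l i] e94 by linarith
  have e98: "R m j l i k = (R i l j m k)"
    using A1[of j m l i k] e76 by linarith
  have e99: "R m j l k i = (R i l j m k) - (R i k j m l)"
    using A1[of j m l k i] e90 by linarith
  have e100: "R l k j m i = - (R i l j m k) + (R i k j m l)"
    using A3[of j m l k i] e90 by linarith
  have e101: "R k i l m j = (R i k j l m) - (R i k j m l)"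
    using A5[of k i j l m] e18 e30 by linarith
  have e102: "R l m k i j = (R i k j l m) - (R i k j m l)"
    using A3[of k i l m j] e101 by linarith
  have e103: "R k l m i j = (R i k j m l) - (R i l j m k) - (R i j k l m)"
    using A4[of k i l m j] e101 e44 by linarith
  have e104: "R m l k i j = (R i k j m l) - (R i k j l m)"
    using A3[of k i m l j] e33 by linarith
  have e105: "R k m l i j = (R i k j l m) - (R i l j m k) - (R i j k l m)"
    using A4[of k i m l j] e33 e59 by linarith
  have e106: "R l m k j i = (R i k j l m) - (R i j k l m) + (R i j k m l) - (R i k j m l)"
    using A3[of k j l m i] e80 by linarith
  have e107: "R k l m j i = (R i k j m l) - (R i l j m k)"
    using A4[of k j l m i] e80 e89 by linarith
  have e108: "R m l k j i = (R i k j m l) - (R i j k m l) + (R i j k l m) - (R i k j l m)"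
    using A3[of k j m l i] e83 by linarith
  have e109: "R k m l j i = (R i j k m l) - (R i j k l m) + (R i k j l m) - (R i l j m k)"
    using A4[of k j m l i] e83 e97 by linarith
  have e110: "R l k m i j = - (R i k j m l) + (R i l j m k) + (R i j k l m)"
    using A1[of k l m i j] e103 by linarith
  have e111: "R l k m j i = - (R i k j m l) + (R i l j m k)"
    using A1[of k l m j i] e107 by linarith
  have e112: "R m k l i j = - (R i k j l m) + (R i l j m k) + (R i j k l m)"
    using A1[of k m l i j] e105 by linarith
  have e113: "R l i k m j = (R i k j l m) - (R i l j m k) - (R i j k l m)"
    using A3[of k m l i j] e105 by linarith
  have e114: "R m k l j i = - (R i j k m l) + (R i j k l m) - (R i k j l m) + (R i l j m k)"
    using A1[of k m l j i] e109 by linarith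
  show "R j i k l m = - (R i j k l m)" by (rule e0)
  show "R i j l k m = - (R i j k l m)" by (rule e1)
  show "R k l i j m = (R i j k l m)" by (rule e2)
  show "R j i k m l = - (R i j k m l)" by (rule e3)
  show "R i j m k l = - (R i j k m l)" by (rule e4)
  show "R k m i j l = (R i j k m l)" by (rule e5)
  show "R i j m l k = - (R i j k m l) + (R i j k l m)" by (rule e6)
  show "R j i l k m = (R i j k l m)" by (rule e7)
  show "R l k i j m = - (R i j k l m)" by (rule e8)
  show "R i l k j m = (R i j k l m) - (R i k j l m)" by (rule e9)
  show "R i j l m k = (R i j k m l) - (R i j k l m)" by (rule e10)
  show "R l m i j k = (R i j k m l) - (R i j k l m)" by (rule e11)
  show "R j i m k l = (R i j k m l)" by (rule e12)
  show "R m k i j l = - (R i j k m l)" by (rule e13)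
  show "R i m k j l = (R i j k m l) - (R i k j m l)" by (rule e14)
  show "R j i m l k = (R i j k m l) - (R i j k l m)" by (rule e15)
  show "R m l i j k = - (R i j k m l) + (R i j k l m)" by (rule e16)
  show "R i m l j k = (R i j k m l) - (R i j k l m) - (R i l j m k)" by (rule e17)
  show "R k i j l m = - (R i k j l m)" by (rule e18)
  show "R i k l j m = - (R i k j l m)" by (rule e19)
  show "R j l i k m = (R i k j l m)" by (rule e20)
  show "R k i j m l = - (R i k j m l)" by (rule e21)
  show "R i k m j l = - (R i k j m l)" by (rule e22)
  show "R j m i k l = (R i k j m l)" by (rule e23)
  show "R i k m l j = - (R i k j m l) + (R i k j l m)" by (rule e24)
  show "R k i l j m = (R i k j l m)" by (rule e25)
  show "R l j i k m = - (R i k j l m)" by (rule e26)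
  show "R i l j k m = (R i k j l m) - (R i j k l m)" by (rule e27)
  show "R i k l m j = (R i k j m l) - (R i k j l m)" by (rule e28)
  show "R l m i k j = (R i k j m l) - (R i k j l m)" by (rule e29)
  show "R k i m j l = (R i k j m l)" by (rule e30)
  show "R m j i k l = - (R i k j m l)" by (rule e31)
  show "R i m j k l = (R i k j m l) - (R i j k m l)" by (rule e32)
  show "R k i m l j = (R i k j m l) - (R i k j l m)" by (rule e33)
  show "R m l i k j = - (R i k j m l) + (R i k j l m)" by (rule e34)
  show "R l i j k m = - (R i k j l m) + (R i j k l m)" by (rule e35)
  show "R j k i l m = (R i k j l m) - (R i j k l m)" by (rule e36)
  show "R l i j m k = - (R i l j m k)" by (rule e37)
  show "R i l m j k = - (R i l j m k)" by (rule e38)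
  show "R j m i l k = (R i l j m k)" by (rule e39)
  show "R i l m k j = - (R i l j m k) - (R i j k l m) + (R i k j l m)" by (rule e40)
  show "R l i k j m = - (R i j k l m) + (R i k j l m)" by (rule e41)
  show "R k j i l m = (R i j k l m) - (R i k j l m)" by (rule e42)
  show "R i l k m j = (R i l j m k) + (R i j k l m) - (R i k j l m)" by (rule e43)
  show "R k m i l j = (R i l j m k) + (R i j k l m) - (R i k j l m)" by (rule e44)
  show "R i m l k j = - (R i l j m k) - (R i j k l m) + (R i k j m l)" by (rule e45)
  show "R l i m j k = (R i l j m k)" by (rule e46)
  show "R m j i l k = - (R i l j m k)" by (rule e47)
  show "R i m j l k = (R i l j m k) - (R i j k m l) + (R i j k l m)" by (rule e48)
  show "R l i m k j = (R i l j m k) + (R i j k l m) - (R i k j l m)" by (rule e49)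
  show "R m k i l j = - (R i l j m k) - (R i j k l m) + (R i k j l m)" by (rule e50)
  show "R i m k l j = (R i l j m k) + (R i j k l m) - (R i k j m l)" by (rule e51)
  show "R m i j k l = - (R i k j m l) + (R i j k m l)" by (rule e52)
  show "R j k i m l = (R i k j m l) - (R i j k m l)" by (rule e53)
  show "R m i j l k = - (R i l j m k) + (R i j k m l) - (R i j k l m)" by (rule e54)
  show "R j l i m k = (R i l j m k) - (R i j k m l) + (R i j k l m)" by (rule e55)
  show "R m i k j l = - (R i j k m l) + (R i k j m l)" by (rule e56)
  show "R k j i m l = (R i j k m l) - (R i k j m l)" by (rule e57)
  show "R m i k l j = - (R i l j m k) - (R i j k l m) + (R i k j m l)" by (rule e58)
  show "R k l i m j = (R i l j m k) + (R i j k l m) - (R i k j m l)" by (rule e59)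
  show "R m i l j k = - (R i j k m l) + (R i j k l m) + (R i l j m k)" by (rule e60)
  show "R l j i m k = (R i j k m l) - (R i j k l m) - (R i l j m k)" by (rule e61)
  show "R m i l k j = (R i l j m k) + (R i j k l m) - (R i k j m l)" by (rule e62)
  show "R l k i m j = - (R i l j m k) - (R i j k l m) + (R i k j m l)" by (rule e63)
  show "R k l j i m = - (R i j k l m)" by (rule e64)
  show "R j k l i m = (R i j k l m) - (R i k j l m)" by (rule e65)
  show "R j i l m k = (R i j k l m) - (R i j k m l)" by (rule e66)
  show "R k m j i l = - (R i j k m l)" by (rule e67)
  show "R j k m i l = (R i j k m l) - (R i k j m l)" by (rule e68)
  show "R l k j i m = (R i j k l m)" by (rule e69)
  show "R j l k i m = - (R i k j l m)" by (rule e70)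
  show "R l m j i k = (R i j k l m) - (R i j k m l)" by (rule e71)
  show "R j l m i k = - (R i j k l m) + (R i j k m l) - (R i l j m k)" by (rule e72)
  show "R m k j i l = (R i j k m l)" by (rule e73)
  show "R j m k i l = - (R i k j m l)" by (rule e74)
  show "R m l j i k = (R i j k m l) - (R i j k l m)" by (rule e75)
  show "R j m l i k = - (R i l j m k)" by (rule e76)
  show "R j k l m i = - (R i k j l m) + (R i j k l m) - (R i j k m l) + (R i k j m l)" by (rule e77)
  show "R j k m l i = - (R i k j m l) + (R i j k m l) - (R i j k l m) + (R i k j l m)" by (rule e78)
  show "R k j l i m = - (R i j k l m) + (R i k j l m)" by (rule e79)
  show "R k j l m i = (R i k j l m) - (R i j k l m) + (R i j k m l) - (R i k j m l)" by (rule e80)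
  show "R l m j k i = - (R i k j l m) + (R i j k l m) - (R i j k m l) + (R i k j m l)" by (rule e81)
  show "R k j m i l = - (R i j k m l) + (R i k j m l)" by (rule e82)
  show "R k j m l i = (R i k j m l) - (R i j k m l) + (R i j k l m) - (R i k j l m)" by (rule e83)
  show "R m l j k i = - (R i k j m l) + (R i j k m l) - (R i j k l m) + (R i k j l m)" by (rule e84)
  show "R j l k m i = - (R i k j l m) + (R i j k l m) - (R i j k m l) + (R i l j m k)" by (rule e85)
  show "R j l m k i = - (R i l j m k) + (R i j k m l) - (R i j k l m) + (R i k j l m)" by (rule e86)
  show "R l j k i m = (R i k j l m)" by (rule e87)
  show "R l j k m i = (R i k j l m) - (R i j k l m) + (R i j k m l) - (R i l j m k)" by (rule e88)
  show "R k m j l i = - (R i k j l m) + (R i j k l m) - (R i j k m l) + (R i l j m k)" by (rule e89)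
  show "R j m l k i = - (R i l j m k) + (R i k j m l)" by (rule e90)
  show "R l j m i k = (R i j k l m) - (R i j k m l) + (R i l j m k)" by (rule e91)
  show "R l j m k i = (R i l j m k) - (R i j k m l) + (R i j k l m) - (R i k j l m)" by (rule e92)
  show "R m k j l i = - (R i l j m k) + (R i j k m l) - (R i j k l m) + (R i k j l m)" by (rule e93)
  show "R j m k l i = (R i l j m k) - (R i k j m l)" by (rule e94)
  show "R m j k i l = (R i k j m l)" by (rule e95)
  show "R m j k l i = - (R i l j m k) + (R i k j m l)" by (rule e96)
  show "R k l j m i = (R i l j m k) - (R i k j m l)" by (rule e97)
  show "R m j l i k = (R i l j m k)" by (rule e98)
  show "R m j l k i = (R i l j m k) - (R i k j m l)" by (rule e99)
  show "R l k j m i = - (R i l j m k) + (R i k j m l)" by (rule e100)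
  show "R k i l m j = (R i k j l m) - (R i k j m l)" by (rule e101)
  show "R l m k i j = (R i k j l m) - (R i k j m l)" by (rule e102)
  show "R k l m i j = (R i k j m l) - (R i l j m k) - (R i j k l m)" by (rule e103)
  show "R m l k i j = (R i k j m l) - (R i k j l m)" by (rule e104)
  show "R k m l i j = (R i k j l m) - (R i l j m k) - (R i j k l m)" by (rule e105)
  show "R l m k j i = (R i k j l m) - (R i j k l m) + (R i j k m l) - (R i k j m l)" by (rule e106)
  show "R k l m j i = (R i k j m l) - (R i l j m k)" by (rule e107)
  show "R m l k j i = (R i k j m l) - (R i j k m l) + (R i j k l m) - (R i k j l m)" by (rule e108)
  show "R k m l j i = (R i j k m l) - (R i j k l m) + (R i k j l m) - (R i l j m k)" by (rule e109)
  show "R l k m i j = - (R i k j m l) + (R i l j m k) + (R i j k l m)" by (rule e110)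
  show "R l k m j i = - (R i k j m l) + (R i l j m k)" by (rule e111)
  show "R m k l i j = - (R i k j l m) + (R i l j m k) + (R i j k l m)" by (rule e112)
  show "R l i k m j = (R i k j l m) - (R i l j m k) - (R i j k l m)" by (rule e113)
  show "R m k l j i = - (R i j k m l) + (R i j k l m) - (R i k j l m) + (R i l j m k)" by (rule e114)
qed

lemma sum_fun_app: "(\<Sum>p\<in>A. f p) x = (\<Sum>p\<in>A. f p x)"
  by (induct A rule: infinite_finite_induct) auto

lemma sum_fun_app5: "(\<Sum>p\<in>A. f p) i1 i2 i3 i4 i5 = (\<Sum>p\<in>A. f p i1 i2 i3 i4 i5)"
  by (simp add: sum_fun_app)

lemma act5_sum: "act5 a (\<Sum>p\<in>A. T p) = (\<Sum>p\<in>A. act5 a (T p))"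
proof (intro ext)
  fix i1 i2 i3 i4 i5
  show "act5 a (\<Sum>p\<in>A. T p) i1 i2 i3 i4 i5 = (\<Sum>p\<in>A. act5 a (T p)) i1 i2 i3 i4 i5"
    unfolding act5_def Let_def sum_fun_app5 sum_distrib_left
    by (rule sum.swap)
qed

definition sy12 :: "'n tensor3 \<Rightarrow> 'n tensor3" where "sy12 Z = (\<lambda>x y z. (Z x y z + Z y x z) / 2)"
definition an12 :: "'n tensor3 \<Rightarrow> 'n tensor3" where "an12 Z = (\<lambda>x y z. (Z x y z - Z y x z) / 2)"
definition us :: "'n tensor3 \<Rightarrow> 'n tensor3" where "us Z = sy12 Z - sym3 (sy12 Z)"
definition ua :: "'n tensor3 \<Rightarrow> 'n tensor3" where "ua Z = an12 Z - alt3 (an12 Z)"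
definition Es :: "real \<Rightarrow> 'n \<Rightarrow> 'n \<Rightarrow> 'n tensor2" where
  "Es c a b = (\<lambda>x y. c * ((if (a,b) = (x,y) then 1 else 0) + (if (a,b) = (y,x) then 1 else 0)))"
definition Ea :: "real \<Rightarrow> 'n \<Rightarrow> 'n \<Rightarrow> 'n tensor2" where
  "Ea c a b = (\<lambda>x y. c * ((if (a,b) = (x,y) then 1 else 0) - (if (a,b) = (y,x) then 1 else 0)))"

lemma ite_m2: "(if A then 1 else 0) * (f::real) = (if A then f else 0)" by simp

lemma us_in: "us Z \<in> U_s"
proof -
  have "\<forall>i j k. sy12 Z i j k = sy12 Z j i k" by (simp add: sy12_def add.commute)
  then show ?thesis unfolding U_s_def us_def by blast
qed
lemma ua_in: "ua Z \<in> U_a"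
proof -
  have "\<forall>i j k. an12 Z i j k = - an12 Z j i k" by (simp add: an12_def field_simps)
  then show ?thesis unfolding U_a_def ua_def by blast
qed
lemma Es_sym: "symmetric2 (Es c a b)"
  unfolding symmetric2_def Es_def by (simp split del: if_split add: add.commute)
lemma Ea_alt: "alternating2 (Ea c a b)"
  unfolding alternating2_def Ea_def by (simp split del: if_split add: algebra_simps)

lemma sum_Es: fixes F :: "('n::finite \<times> 'n) \<Rightarrow> real" shows "(\<Sum>p\<in>UNIV. Es c (fst p) (snd p) x y * F p) = c * (F (x,y) + F (y,x))"
proof -
  have "Es c (fst p) (snd p) x y * F p = c * ((if p = (x,y) then F p else 0) + (if p = (y,x) then F p else 0))" for p
    unfolding Es_def by (simp only: distrib_left distrib_right right_diff_distrib left_diff_distrib mult.assoc ite_m2 prod.collapse)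
  then have "(\<Sum>p\<in>UNIV. Es c (fst p) (snd p) x y * F p) = (\<Sum>p\<in>UNIV. c * ((if p = (x,y) then F p else 0) + (if p = (y,x) then F p else 0)))"
    by simp
  also have "\<dots> = c * ((\<Sum>p\<in>UNIV. if p = (x,y) then F p else 0) + (\<Sum>p\<in>UNIV. if p = (y,x) then F p else 0))"
    by (simp only: sum.distrib[symmetric] sum_distrib_left)
  also have "\<dots> = c * (F (x,y) + F (y,x))" by simp
  finally show ?thesis .
qed

lemma sum_Ea: fixes F :: "('n::finite \<times> 'n) \<Rightarrow> real" shows "(\<Sum>p\<in>UNIV. Ea c (fst p) (snd p) x y * F p) = c * (F (x,y) - F (y,x))"
proof -
  have "Ea c (fst p) (snd p) x y * F p = c * ((if p = (x,y) then F p else 0) - (if p = (y,x) then F p else 0))" for p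
    unfolding Ea_def by (simp only: distrib_left distrib_right right_diff_distrib left_diff_distrib mult.assoc ite_m2 prod.collapse)
  then have "(\<Sum>p\<in>UNIV. Ea c (fst p) (snd p) x y * F p) = (\<Sum>p\<in>UNIV. c * ((if p = (x,y) then F p else 0) - (if p = (y,x) then F p else 0)))"
    by simp
  also have "\<dots> = c * ((\<Sum>p\<in>UNIV. if p = (x,y) then F p else 0) - (\<Sum>p\<in>UNIV. if p = (y,x) then F p else 0))"
    by (simp only: sum_subtractf[symmetric] sum_distrib_left)
  also have "\<dots> = c * (F (x,y) - F (y,x))" by simp
  finally show ?thesis .
qed

lemma sum_Es': fixes F :: "('n::finite \<times> 'n) \<Rightarrow> real" shows "(\<Sum>p\<in>UNIV. F p * Es c (fst p) (snd p) x y) = c * (F (x,y) + F (y,x))"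
  using sum_Es[of c x y F] by (simp add: mult.commute)
lemma sum_Ea': fixes F :: "('n::finite \<times> 'n) \<Rightarrow> real" shows "(\<Sum>p\<in>UNIV. F p * Ea c (fst p) (snd p) x y) = c * (F (x,y) - F (y,x))"
  using sum_Ea[of c x y F] by (simp add: mult.commute)

lemma case_23Ss:
  fixes R :: "('n::finite) tensor5"
  assumes A: "is_acdct R"
  shows "R = (\<Sum>p\<in>UNIV. act5 (gstar yt) (tprod23 (Es (- 1 / 8) (fst p) (snd p)) (us (\<lambda>x y z. R (fst p) x (snd p) y z))))"
proof -
  have Q: "(\<Sum>p\<in>UNIV. tprod23 (Es (- 1 / 8) (fst p) (snd p)) (us (\<lambda>x y z. R (fst p) x (snd p) y z))) = (\<lambda>i1 i2 i3 i4 i5. - (1 / 24) * (R i1 i3 i2 i4 i5) - (1 / 24) * (R i1 i4 i2 i3 i5) + (1 / 48) * (R i1 i4 i2 i5 i3) + (1 / 48) * (R i1 i5 i2 i4 i3) + (1 / 48) * (R i1 i5 i2 i3 i4) + (1 / 48) * (R i1 i3 i2 i5 i4) - (1 / 24) * (R i2 i3 i1 i4 i5) - (1 / 24) * (R i2 i4 i1 i3 i5) + (1 / 48) * (R i2 i4 i1 i5 i3) + (1 / 48) * (R i2 i5 i1 i4 i3) + (1 / 48) * (R i2 i5 i1 i3 i4) + (1 / 48) * (R i2 i3 i1 i5 i4))"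
  proof (intro ext)
    fix i1 i2 i3 i4 i5
    have "(\<Sum>p\<in>UNIV. tprod23 (Es (- 1 / 8) (fst p) (snd p)) (us (\<lambda>x y z. R (fst p) x (snd p) y z))) i1 i2 i3 i4 i5 = (\<Sum>p\<in>UNIV. Es (- 1 / 8) (fst p) (snd p) i1 i2 * us (\<lambda>x y z. R (fst p) x (snd p) y z) i3 i4 i5)"
      by (simp add: sum_fun_app5 tprod23_def)
    also have "\<dots> = (- 1 / 8) * ((\<lambda>p. us (\<lambda>x y z. R (fst p) x (snd p) y z) i3 i4 i5) (i1,i2) + (\<lambda>p. us (\<lambda>x y z. R (fst p) x (snd p) y z) i3 i4 i5) (i2,i1))"
      by (rule sum_Es[where F = "(\<lambda>p. us (\<lambda>x y z. R (fst p) x (snd p) y z) i3 i4 i5)"])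
    also have "\<dots> = (\<lambda>i1 i2 i3 i4 i5. - (1 / 24) * (R i1 i3 i2 i4 i5) - (1 / 24) * (R i1 i4 i2 i3 i5) + (1 / 48) * (R i1 i4 i2 i5 i3) + (1 / 48) * (R i1 i5 i2 i4 i3) + (1 / 48) * (R i1 i5 i2 i3 i4) + (1 / 48) * (R i1 i3 i2 i5 i4) - (1 / 24) * (R i2 i3 i1 i4 i5) - (1 / 24) * (R i2 i4 i1 i3 i5) + (1 / 48) * (R i2 i4 i1 i5 i3) + (1 / 48) * (R i2 i5 i1 i4 i3) + (1 / 48) * (R i2 i5 i1 i3 i4) + (1 / 48) * (R i2 i3 i1 i5 i4)) i1 i2 i3 i4 i5"
      by (simp add: us_def sy12_def sym3_def alt3_def fun_diff_def field_simps)
    finally show "(\<Sum>p\<in>UNIV. tprod23 (Es (- 1 / 8) (fst p) (snd p)) (us (\<lambda>x y z. R (fst p) x (snd p) y z))) i1 i2 i3 i4 i5 = (\<lambda>i1 i2 i3 i4 i5. - (1 / 24) * (R i1 i3 i2 i4 i5) - (1 / 24) * (R i1 i4 i2 i3 i5) + (1 / 48) * (R i1 i4 i2 i5 i3) + (1 / 48) * (R i1 i5 i2 i4 i3) + (1 / 48) * (R i1 i5 i2 i3 i4) + (1 / 48) * (R i1 i3 i2 i5 i4) - (1 / 24) * (R i2 i3 i1 i4 i5) - (1 / 24) * (R i2 i4 i1 i3 i5) + (1 / 48) * (R i2 i4 i1 i5 i3) + (1 / 48) * (R i2 i5 i1 i4 i3) + (1 / 48) * (R i2 i5 i1 i3 i4)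 + (1 / 48) * (R i2 i3 i1 i5 i4)) i1 i2 i3 i4 i5" .
  qed
  have Y: "Yf (\<lambda>i1 i2 i3 i4 i5. - (1 / 24) * (R i1 i3 i2 i4 i5) - (1 / 24) * (R i1 i4 i2 i3 i5) + (1 / 48) * (R i1 i4 i2 i5 i3) + (1 / 48) * (R i1 i5 i2 i4 i3) + (1 / 48) * (R i1 i5 i2 i3 i4) + (1 / 48) * (R i1 i3 i2 i5 i4) - (1 / 24) * (R i2 i3 i1 i4 i5) - (1 / 24) * (R i2 i4 i1 i3 i5) + (1 / 48) * (R i2 i4 i1 i5 i3) + (1 / 48) * (R i2 i5 i1 i4 i3) + (1 / 48) * (R i2 i5 i1 i3 i4) + (1 / 48) * (R i2 i3 i1 i5 i4)) = R"
  proof (intro ext)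
    fix i j k l m
    note nf = acdct_nf[OF A, where i=i and j=j and k=k and l=l and m=m]
    show "Yf (\<lambda>i1 i2 i3 i4 i5. - (1 / 24) * (R i1 i3 i2 i4 i5) - (1 / 24) * (R i1 i4 i2 i3 i5) + (1 / 48) * (R i1 i4 i2 i5 i3) + (1 / 48) * (R i1 i5 i2 i4 i3) + (1 / 48) * (R i1 i5 i2 i3 i4) + (1 / 48) * (R i1 i3 i2 i5 i4) - (1 / 24) * (R i2 i3 i1 i4 i5) - (1 / 24) * (R i2 i4 i1 i3 i5) + (1 / 48) * (R i2 i4 i1 i5 i3) + (1 / 48) * (R i2 i5 i1 i4 i3) + (1 / 48) * (R i2 i5 i1 i3 i4) + (1 / 48) * (R i2 i3 i1 i5 i4)) i j k l m = R i j k l m"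
      unfolding Yf_def by (simp only: nf) (simp add: algebra_simps)
  qed
  have "(\<Sum>p\<in>UNIV. act5 (gstar yt) (tprod23 (Es (- 1 / 8) (fst p) (snd p)) (us (\<lambda>x y z. R (fst p) x (snd p) y z)))) = act5 (gstar yt) (\<Sum>p\<in>UNIV. tprod23 (Es (- 1 / 8) (fst p) (snd p)) (us (\<lambda>x y z. R (fst p) x (snd p) y z)))"
    by (rule act5_sum[symmetric])
  also have "\<dots> = R" unfolding Yexp Q by (rule Y)
  finally show ?thesis by (rule sym)
qed

lemma case_23Sa:
  fixes R :: "('n::finite) tensor5"
  assumes A: "is_acdct R"
  shows "R = (\<Sum>p\<in>UNIV. act5 (gstar yt) (tprod23 (Es (1 / 12) (fst p) (snd p)) (ua (\<lambda>x y z. R (fst p) x (snd p) z y))))"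
proof -
  have Q: "(\<Sum>p\<in>UNIV. tprod23 (Es (1 / 12) (fst p) (snd p)) (ua (\<lambda>x y z. R (fst p) x (snd p) z y))) = (\<lambda>i1 i2 i3 i4 i5. (1 / 36) * (R i1 i3 i2 i5 i4) - (1 / 36) * (R i1 i4 i2 i5 i3) - (1 / 72) * (R i1 i4 i2 i3 i5) + (1 / 72) * (R i1 i5 i2 i3 i4) - (1 / 72) * (R i1 i5 i2 i4 i3) + (1 / 72) * (R i1 i3 i2 i4 i5) + (1 / 36) * (R i2 i3 i1 i5 i4) - (1 / 36) * (R i2 i4 i1 i5 i3) - (1 / 72) * (R i2 i4 i1 i3 i5) + (1 / 72) * (R i2 i5 i1 i3 i4) - (1 / 72) * (R i2 i5 i1 i4 i3) + (1 / 72) * (R i2 i3 i1 i4 i5))"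
  proof (intro ext)
    fix i1 i2 i3 i4 i5
    have "(\<Sum>p\<in>UNIV. tprod23 (Es (1 / 12) (fst p) (snd p)) (ua (\<lambda>x y z. R (fst p) x (snd p) z y))) i1 i2 i3 i4 i5 = (\<Sum>p\<in>UNIV. Es (1 / 12) (fst p) (snd p) i1 i2 * ua (\<lambda>x y z. R (fst p) x (snd p) z y) i3 i4 i5)"
      by (simp add: sum_fun_app5 tprod23_def)
    also have "\<dots> = (1 / 12) * ((\<lambda>p. ua (\<lambda>x y z. R (fst p) x (snd p) z y) i3 i4 i5) (i1,i2) + (\<lambda>p. ua (\<lambda>x y z. R (fst p) x (snd p) z y) i3 i4 i5) (i2,i1))"
      by (rule sum_Es[where F = "(\<lambda>p. ua (\<lambda>x y z. R (fst p) x (snd p) z y) i3 i4 i5)"])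
    also have "\<dots> = (\<lambda>i1 i2 i3 i4 i5. (1 / 36) * (R i1 i3 i2 i5 i4) - (1 / 36) * (R i1 i4 i2 i5 i3) - (1 / 72) * (R i1 i4 i2 i3 i5) + (1 / 72) * (R i1 i5 i2 i3 i4) - (1 / 72) * (R i1 i5 i2 i4 i3) + (1 / 72) * (R i1 i3 i2 i4 i5) + (1 / 36) * (R i2 i3 i1 i5 i4) - (1 / 36) * (R i2 i4 i1 i5 i3) - (1 / 72) * (R i2 i4 i1 i3 i5) + (1 / 72) * (R i2 i5 i1 i3 i4) - (1 / 72) * (R i2 i5 i1 i4 i3) + (1 / 72) * (R i2 i3 i1 i4 i5)) i1 i2 i3 i4 i5"
      by (simp add: ua_def an12_def sym3_def alt3_def fun_diff_def field_simps)
    finally show "(\<Sum>p\<in>UNIV. tprod23 (Es (1 / 12) (fst p) (snd p)) (ua (\<lambda>x y z. R (fst p) x (snd p) z y))) i1 i2 i3 i4 i5 = (\<lambda>i1 i2 i3 i4 i5. (1 / 36) * (R i1 i3 i2 i5 i4) - (1 / 36) * (R i1 i4 i2 i5 i3) - (1 / 72) * (R i1 i4 i2 i3 i5) + (1 / 72) * (R i1 i5 i2 i3 i4) - (1 / 72) * (R i1 i5 i2 i4 i3) + (1 / 72) * (R i1 i3 i2 i4 i5) + (1 / 36) * (R i2 i3 i1 i5 i4) - (1 / 36) * (R i2 i4 i1 i5 i3) - (1 / 72) * (R i2 i4 i1 i3 i5) + (1 / 72) * (R i2 i5 i1 i3 i4) - (1 / 72) * (R i2 i5 i1 i4 i3)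 + (1 / 72) * (R i2 i3 i1 i4 i5)) i1 i2 i3 i4 i5" .
  qed
  have Y: "Yf (\<lambda>i1 i2 i3 i4 i5. (1 / 36) * (R i1 i3 i2 i5 i4) - (1 / 36) * (R i1 i4 i2 i5 i3) - (1 / 72) * (R i1 i4 i2 i3 i5) + (1 / 72) * (R i1 i5 i2 i3 i4) - (1 / 72) * (R i1 i5 i2 i4 i3) + (1 / 72) * (R i1 i3 i2 i4 i5) + (1 / 36) * (R i2 i3 i1 i5 i4) - (1 / 36) * (R i2 i4 i1 i5 i3) - (1 / 72) * (R i2 i4 i1 i3 i5) + (1 / 72) * (R i2 i5 i1 i3 i4) - (1 / 72) * (R i2 i5 i1 i4 i3) + (1 / 72) * (R i2 i3 i1 i4 i5)) = R"
  proof (intro ext)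
    fix i j k l m
    note nf = acdct_nf[OF A, where i=i and j=j and k=k and l=l and m=m]
    show "Yf (\<lambda>i1 i2 i3 i4 i5. (1 / 36) * (R i1 i3 i2 i5 i4) - (1 / 36) * (R i1 i4 i2 i5 i3) - (1 / 72) * (R i1 i4 i2 i3 i5) + (1 / 72) * (R i1 i5 i2 i3 i4) - (1 / 72) * (R i1 i5 i2 i4 i3) + (1 / 72) * (R i1 i3 i2 i4 i5) + (1 / 36) * (R i2 i3 i1 i5 i4) - (1 / 36) * (R i2 i4 i1 i5 i3) - (1 / 72) * (R i2 i4 i1 i3 i5) + (1 / 72) * (R i2 i5 i1 i3 i4) - (1 / 72) * (R i2 i5 i1 i4 i3) + (1 / 72) * (R i2 i3 i1 i4 i5)) i j k l m = R i j k l m"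
      unfolding Yf_def by (simp only: nf) (simp add: algebra_simps)
  qed
  have "(\<Sum>p\<in>UNIV. act5 (gstar yt) (tprod23 (Es (1 / 12) (fst p) (snd p)) (ua (\<lambda>x y z. R (fst p) x (snd p) z y)))) = act5 (gstar yt) (\<Sum>p\<in>UNIV. tprod23 (Es (1 / 12) (fst p) (snd p)) (ua (\<lambda>x y z. R (fst p) x (snd p) z y)))"
    by (rule act5_sum[symmetric])
  also have "\<dots> = R" unfolding Yexp Q by (rule Y)
  finally show ?thesis by (rule sym)
qed

lemma case_23As:
  fixes R :: "('n::finite) tensor5"
  assumes A: "is_acdct R"
  shows "R = (\<Sum>p\<in>UNIV. act5 (gstar yt) (tprod23 (Ea (- 1 / 24) (fst p) (snd p)) (us (\<lambda>x y z. R (fst p) (snd p) x z y))))"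
proof -
  have Q: "(\<Sum>p\<in>UNIV. tprod23 (Ea (- 1 / 24) (fst p) (snd p)) (us (\<lambda>x y z. R (fst p) (snd p) x z y))) = (\<lambda>i1 i2 i3 i4 i5. - (1 / 72) * (R i1 i2 i3 i5 i4) - (1 / 72) * (R i1 i2 i4 i5 i3) + (1 / 144) * (R i1 i2 i4 i3 i5) + (1 / 144) * (R i1 i2 i5 i3 i4) + (1 / 144) * (R i1 i2 i5 i4 i3) + (1 / 144) * (R i1 i2 i3 i4 i5) + (1 / 72) * (R i2 i1 i3 i5 i4) + (1 / 72) * (R i2 i1 i4 i5 i3) - (1 / 144) * (R i2 i1 i4 i3 i5) - (1 / 144) * (R i2 i1 i5 i3 i4) - (1 / 144) * (R i2 i1 i5 i4 i3) - (1 / 144) * (R i2 i1 i3 i4 i5))"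
  proof (intro ext)
    fix i1 i2 i3 i4 i5
    have "(\<Sum>p\<in>UNIV. tprod23 (Ea (- 1 / 24) (fst p) (snd p)) (us (\<lambda>x y z. R (fst p) (snd p) x z y))) i1 i2 i3 i4 i5 = (\<Sum>p\<in>UNIV. Ea (- 1 / 24) (fst p) (snd p) i1 i2 * us (\<lambda>x y z. R (fst p) (snd p) x z y) i3 i4 i5)"
      by (simp add: sum_fun_app5 tprod23_def)
    also have "\<dots> = (- 1 / 24) * ((\<lambda>p. us (\<lambda>x y z. R (fst p) (snd p) x z y) i3 i4 i5) (i1,i2) - (\<lambda>p. us (\<lambda>x y z. R (fst p) (snd p) x z y) i3 i4 i5) (i2,i1))"
      by (rule sum_Ea[where F = "(\<lambda>p. us (\<lambda>x y z. R (fst p) (snd p) x z y) i3 i4 i5)"])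
    also have "\<dots> = (\<lambda>i1 i2 i3 i4 i5. - (1 / 72) * (R i1 i2 i3 i5 i4) - (1 / 72) * (R i1 i2 i4 i5 i3) + (1 / 144) * (R i1 i2 i4 i3 i5) + (1 / 144) * (R i1 i2 i5 i3 i4) + (1 / 144) * (R i1 i2 i5 i4 i3) + (1 / 144) * (R i1 i2 i3 i4 i5) + (1 / 72) * (R i2 i1 i3 i5 i4) + (1 / 72) * (R i2 i1 i4 i5 i3) - (1 / 144) * (R i2 i1 i4 i3 i5) - (1 / 144) * (R i2 i1 i5 i3 i4) - (1 / 144) * (R i2 i1 i5 i4 i3) - (1 / 144) * (R i2 i1 i3 i4 i5)) i1 i2 i3 i4 i5"
      by (simp add: us_def sy12_def sym3_def alt3_def fun_diff_def field_simps)
    finally show "(\<Sum>p\<in>UNIV. tprod23 (Ea (- 1 / 24) (fst p) (snd p)) (us (\<lambda>x y z. R (fst p) (snd p) x z y))) i1 i2 i3 i4 i5 = (\<lambda>i1 i2 i3 i4 i5. - (1 / 72) * (R i1 i2 i3 i5 i4) - (1 / 72) * (R i1 i2 i4 i5 i3) + (1 / 144) * (R i1 i2 i4 i3 i5) + (1 / 144) * (R i1 i2 i5 i3 i4) + (1 / 144) * (R i1 i2 i5 i4 i3) + (1 / 144) * (R i1 i2 i3 i4 i5) + (1 / 72) * (R i2 i1 i3 i5 i4) + (1 / 72) * (R i2 i1 i4 i5 i3) - (1 / 144) * (R i2 i1 i4 i3 i5) - (1 / 144) * (R i2 i1 i5 i3 i4) - (1 / 144) * (R i2 i1 i5 i4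 i3) - (1 / 144) * (R i2 i1 i3 i4 i5)) i1 i2 i3 i4 i5" .
  qed
  have Y: "Yf (\<lambda>i1 i2 i3 i4 i5. - (1 / 72) * (R i1 i2 i3 i5 i4) - (1 / 72) * (R i1 i2 i4 i5 i3) + (1 / 144) * (R i1 i2 i4 i3 i5) + (1 / 144) * (R i1 i2 i5 i3 i4) + (1 / 144) * (R i1 i2 i5 i4 i3) + (1 / 144) * (R i1 i2 i3 i4 i5) + (1 / 72) * (R i2 i1 i3 i5 i4) + (1 / 72) * (R i2 i1 i4 i5 i3) - (1 / 144) * (R i2 i1 i4 i3 i5) - (1 / 144) * (R i2 i1 i5 i3 i4) - (1 / 144) * (R i2 i1 i5 i4 i3) - (1 / 144) * (R i2 i1 i3 i4 i5)) = R"
  proof (intro ext)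
    fix i j k l m
    note nf = acdct_nf[OF A, where i=i and j=j and k=k and l=l and m=m]
    show "Yf (\<lambda>i1 i2 i3 i4 i5. - (1 / 72) * (R i1 i2 i3 i5 i4) - (1 / 72) * (R i1 i2 i4 i5 i3) + (1 / 144) * (R i1 i2 i4 i3 i5) + (1 / 144) * (R i1 i2 i5 i3 i4) + (1 / 144) * (R i1 i2 i5 i4 i3) + (1 / 144) * (R i1 i2 i3 i4 i5) + (1 / 72) * (R i2 i1 i3 i5 i4) + (1 / 72) * (R i2 i1 i4 i5 i3) - (1 / 144) * (R i2 i1 i4 i3 i5) - (1 / 144) * (R i2 i1 i5 i3 i4) - (1 / 144) * (R i2 i1 i5 i4 i3) - (1 / 144) * (R i2 i1 i3 i4 i5)) i j k l m = R i j k l m"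
      unfolding Yf_def by (simp only: nf) (simp add: algebra_simps)
  qed
  have "(\<Sum>p\<in>UNIV. act5 (gstar yt) (tprod23 (Ea (- 1 / 24) (fst p) (snd p)) (us (\<lambda>x y z. R (fst p) (snd p) x z y)))) = act5 (gstar yt) (\<Sum>p\<in>UNIV. tprod23 (Ea (- 1 / 24) (fst p) (snd p)) (us (\<lambda>x y z. R (fst p) (snd p) x z y)))"
    by (rule act5_sum[symmetric])
  also have "\<dots> = R" unfolding Yexp Q by (rule Y)
  finally show ?thesis by (rule sym)
qed

lemma case_23Aa:
  fixes R :: "('n::finite) tensor5"
  assumes A: "is_acdct R"
  shows "R = (\<Sum>p\<in>UNIV. act5 (gstar yt) (tprod23 (Ea (1 / 48) (fst p) (snd p)) (ua (\<lambda>x y z. R (fst p) (snd p) x y z))))"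
proof -
  have Q: "(\<Sum>p\<in>UNIV. tprod23 (Ea (1 / 48) (fst p) (snd p)) (ua (\<lambda>x y z. R (fst p) (snd p) x y z))) = (\<lambda>i1 i2 i3 i4 i5. (1 / 144) * (R i1 i2 i3 i4 i5) - (1 / 144) * (R i1 i2 i4 i3 i5) - (1 / 288) * (R i1 i2 i4 i5 i3) + (1 / 288) * (R i1 i2 i5 i4 i3) - (1 / 288) * (R i1 i2 i5 i3 i4) + (1 / 288) * (R i1 i2 i3 i5 i4) - (1 / 144) * (R i2 i1 i3 i4 i5) + (1 / 144) * (R i2 i1 i4 i3 i5) + (1 / 288) * (R i2 i1 i4 i5 i3) - (1 / 288) * (R i2 i1 i5 i4 i3) + (1 / 288) * (R i2 i1 i5 i3 i4) - (1 / 288) * (R i2 i1 i3 i5 i4))"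
  proof (intro ext)
    fix i1 i2 i3 i4 i5
    have "(\<Sum>p\<in>UNIV. tprod23 (Ea (1 / 48) (fst p) (snd p)) (ua (\<lambda>x y z. R (fst p) (snd p) x y z))) i1 i2 i3 i4 i5 = (\<Sum>p\<in>UNIV. Ea (1 / 48) (fst p) (snd p) i1 i2 * ua (\<lambda>x y z. R (fst p) (snd p) x y z) i3 i4 i5)"
      by (simp add: sum_fun_app5 tprod23_def)
    also have "\<dots> = (1 / 48) * ((\<lambda>p. ua (\<lambda>x y z. R (fst p) (snd p) x y z) i3 i4 i5) (i1,i2) - (\<lambda>p. ua (\<lambda>x y z. R (fst p) (snd p) x y z) i3 i4 i5) (i2,i1))"
      by (rule sum_Ea[where F = "(\<lambda>p. ua (\<lambda>x y z. R (fst p) (snd p) x y z) i3 i4 i5)"])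
    also have "\<dots> = (\<lambda>i1 i2 i3 i4 i5. (1 / 144) * (R i1 i2 i3 i4 i5) - (1 / 144) * (R i1 i2 i4 i3 i5) - (1 / 288) * (R i1 i2 i4 i5 i3) + (1 / 288) * (R i1 i2 i5 i4 i3) - (1 / 288) * (R i1 i2 i5 i3 i4) + (1 / 288) * (R i1 i2 i3 i5 i4) - (1 / 144) * (R i2 i1 i3 i4 i5) + (1 / 144) * (R i2 i1 i4 i3 i5) + (1 / 288) * (R i2 i1 i4 i5 i3) - (1 / 288) * (R i2 i1 i5 i4 i3) + (1 / 288) * (R i2 i1 i5 i3 i4) - (1 / 288) * (R i2 i1 i3 i5 i4)) i1 i2 i3 i4 i5"
      by (simp add: ua_def an12_def sym3_def alt3_def fun_diff_def field_simps)
    finally show "(\<Sum>p\<in>UNIV. tprod23 (Ea (1 / 48) (fst p) (snd p)) (ua (\<lambda>x y z. R (fst p) (snd p) x y z))) i1 i2 i3 i4 i5 = (\<lambda>i1 i2 i3 i4 i5. (1 / 144) * (R i1 i2 i3 i4 i5) - (1 / 144) * (R i1 i2 i4 i3 i5) - (1 / 288) * (R i1 i2 i4 i5 i3) + (1 / 288) * (R i1 i2 i5 i4 i3) - (1 / 288) * (R i1 i2 i5 i3 i4) + (1 / 288) * (R i1 i2 i3 i5 i4) - (1 / 144) * (R i2 i1 i3 i4 i5) + (1 / 144) * (R i2 i1 i4 i3 i5) + (1 / 288) * (R i2 i1 i4 i5 i3) - (1 / 288) * (R i2 i1 i5 i4 i3) + (1 / 288) * (R i2 i1 i5 i3 i4)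 - (1 / 288) * (R i2 i1 i3 i5 i4)) i1 i2 i3 i4 i5" .
  qed
  have Y: "Yf (\<lambda>i1 i2 i3 i4 i5. (1 / 144) * (R i1 i2 i3 i4 i5) - (1 / 144) * (R i1 i2 i4 i3 i5) - (1 / 288) * (R i1 i2 i4 i5 i3) + (1 / 288) * (R i1 i2 i5 i4 i3) - (1 / 288) * (R i1 i2 i5 i3 i4) + (1 / 288) * (R i1 i2 i3 i5 i4) - (1 / 144) * (R i2 i1 i3 i4 i5) + (1 / 144) * (R i2 i1 i4 i3 i5) + (1 / 288) * (R i2 i1 i4 i5 i3) - (1 / 288) * (R i2 i1 i5 i4 i3) + (1 / 288) * (R i2 i1 i5 i3 i4) - (1 / 288) * (R i2 i1 i3 i5 i4)) = R"
  proof (intro ext)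
    fix i j k l m
    note nf = acdct_nf[OF A, where i=i and j=j and k=k and l=l and m=m]
    show "Yf (\<lambda>i1 i2 i3 i4 i5. (1 / 144) * (R i1 i2 i3 i4 i5) - (1 / 144) * (R i1 i2 i4 i3 i5) - (1 / 288) * (R i1 i2 i4 i5 i3) + (1 / 288) * (R i1 i2 i5 i4 i3) - (1 / 288) * (R i1 i2 i5 i3 i4) + (1 / 288) * (R i1 i2 i3 i5 i4) - (1 / 144) * (R i2 i1 i3 i4 i5) + (1 / 144) * (R i2 i1 i4 i3 i5) + (1 / 288) * (R i2 i1 i4 i5 i3) - (1 / 288) * (R i2 i1 i5 i4 i3) + (1 / 288) * (R i2 i1 i5 i3 i4) - (1 / 288) * (R i2 i1 i3 i5 i4)) i j k l m = R i j k l m"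
      unfolding Yf_def by (simp only: nf) (simp add: algebra_simps)
  qed
  have "(\<Sum>p\<in>UNIV. act5 (gstar yt) (tprod23 (Ea (1 / 48) (fst p) (snd p)) (ua (\<lambda>x y z. R (fst p) (snd p) x y z)))) = act5 (gstar yt) (\<Sum>p\<in>UNIV. tprod23 (Ea (1 / 48) (fst p) (snd p)) (ua (\<lambda>x y z. R (fst p) (snd p) x y z)))"
    by (rule act5_sum[symmetric])
  also have "\<dots> = R" unfolding Yexp Q by (rule Y)
  finally show ?thesis by (rule sym)
qed

lemma case_32Ss:
  fixes R :: "('n::finite) tensor5"
  assumes A: "is_acdct R"
  shows "R = (\<Sum>p\<in>UNIV. act5 (gstar yt) (tprod32 (us (\<lambda>x y z. R x z y (fst p) (snd p))) (Es (- 1 / 12) (fst p) (snd p))))"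
proof -
  have Q: "(\<Sum>p\<in>UNIV. tprod32 (us (\<lambda>x y z. R x z y (fst p) (snd p))) (Es (- 1 / 12) (fst p) (snd p))) = (\<lambda>i1 i2 i3 i4 i5. - (1 / 36) * (R i1 i3 i2 i4 i5) - (1 / 36) * (R i2 i3 i1 i4 i5) + (1 / 72) * (R i2 i1 i3 i4 i5) + (1 / 72) * (R i3 i1 i2 i4 i5) + (1 / 72) * (R i3 i2 i1 i4 i5) + (1 / 72) * (R i1 i2 i3 i4 i5) - (1 / 36) * (R i1 i3 i2 i5 i4) - (1 / 36) * (R i2 i3 i1 i5 i4) + (1 / 72) * (R i2 i1 i3 i5 i4) + (1 / 72) * (R i3 i1 i2 i5 i4) + (1 / 72) * (R i3 i2 i1 i5 i4) + (1 / 72) * (R i1 i2 i3 i5 i4))"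
  proof (intro ext)
    fix i1 i2 i3 i4 i5
    have "(\<Sum>p\<in>UNIV. tprod32 (us (\<lambda>x y z. R x z y (fst p) (snd p))) (Es (- 1 / 12) (fst p) (snd p))) i1 i2 i3 i4 i5 = (\<Sum>p\<in>UNIV. us (\<lambda>x y z. R x z y (fst p) (snd p)) i1 i2 i3 * Es (- 1 / 12) (fst p) (snd p) i4 i5)"
      by (simp add: sum_fun_app5 tprod32_def)
    also have "\<dots> = (- 1 / 12) * ((\<lambda>p. us (\<lambda>x y z. R x z y (fst p) (snd p)) i1 i2 i3) (i4,i5) + (\<lambda>p. us (\<lambda>x y z. R x z y (fst p) (snd p)) i1 i2 i3) (i5,i4))"
      by (rule sum_Es'[where F = "(\<lambda>p. us (\<lambda>x y z. R x z y (fst p) (snd p)) i1 i2 i3)"])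
    also have "\<dots> = (\<lambda>i1 i2 i3 i4 i5. - (1 / 36) * (R i1 i3 i2 i4 i5) - (1 / 36) * (R i2 i3 i1 i4 i5) + (1 / 72) * (R i2 i1 i3 i4 i5) + (1 / 72) * (R i3 i1 i2 i4 i5) + (1 / 72) * (R i3 i2 i1 i4 i5) + (1 / 72) * (R i1 i2 i3 i4 i5) - (1 / 36) * (R i1 i3 i2 i5 i4) - (1 / 36) * (R i2 i3 i1 i5 i4) + (1 / 72) * (R i2 i1 i3 i5 i4) + (1 / 72) * (R i3 i1 i2 i5 i4) + (1 / 72) * (R i3 i2 i1 i5 i4) + (1 / 72) * (R i1 i2 i3 i5 i4)) i1 i2 i3 i4 i5"
      by (simp add: us_def sy12_def sym3_def alt3_def fun_diff_def field_simps)
    finally show "(\<Sum>p\<in>UNIV. tprod32 (us (\<lambda>x y z. R x z y (fst p) (snd p))) (Es (- 1 / 12) (fst p) (snd p))) i1 i2 i3 i4 i5 = (\<lambda>i1 i2 i3 i4 i5. - (1 / 36) * (R i1 i3 i2 i4 i5) - (1 / 36) * (R i2 i3 i1 i4 i5) + (1 / 72) * (R i2 i1 i3 i4 i5) + (1 / 72) * (R i3 i1 i2 i4 i5) + (1 / 72) * (R i3 i2 i1 i4 i5) + (1 / 72) * (R i1 i2 i3 i4 i5) - (1 / 36) * (R i1 i3 i2 i5 i4) - (1 / 36) * (R i2 i3 i1 i5 i4) + (1 / 72) * (R i2 i1 i3 i5 i4) + (1 / 72) * (R i3 i1 i2 i5 i4) + (1 / 72) * (R i3 i2 i1 i5 i4)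 + (1 / 72) * (R i1 i2 i3 i5 i4)) i1 i2 i3 i4 i5" .
  qed
  have Y: "Yf (\<lambda>i1 i2 i3 i4 i5. - (1 / 36) * (R i1 i3 i2 i4 i5) - (1 / 36) * (R i2 i3 i1 i4 i5) + (1 / 72) * (R i2 i1 i3 i4 i5) + (1 / 72) * (R i3 i1 i2 i4 i5) + (1 / 72) * (R i3 i2 i1 i4 i5) + (1 / 72) * (R i1 i2 i3 i4 i5) - (1 / 36) * (R i1 i3 i2 i5 i4) - (1 / 36) * (R i2 i3 i1 i5 i4) + (1 / 72) * (R i2 i1 i3 i5 i4) + (1 / 72) * (R i3 i1 i2 i5 i4) + (1 / 72) * (R i3 i2 i1 i5 i4) + (1 / 72) * (R i1 i2 i3 i5 i4)) = R"
  proof (intro ext)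
    fix i j k l m
    note nf = acdct_nf[OF A, where i=i and j=j and k=k and l=l and m=m]
    show "Yf (\<lambda>i1 i2 i3 i4 i5. - (1 / 36) * (R i1 i3 i2 i4 i5) - (1 / 36) * (R i2 i3 i1 i4 i5) + (1 / 72) * (R i2 i1 i3 i4 i5) + (1 / 72) * (R i3 i1 i2 i4 i5) + (1 / 72) * (R i3 i2 i1 i4 i5) + (1 / 72) * (R i1 i2 i3 i4 i5) - (1 / 36) * (R i1 i3 i2 i5 i4) - (1 / 36) * (R i2 i3 i1 i5 i4) + (1 / 72) * (R i2 i1 i3 i5 i4) + (1 / 72) * (R i3 i1 i2 i5 i4) + (1 / 72) * (R i3 i2 i1 i5 i4) + (1 / 72) * (R i1 i2 i3 i5 i4)) i j k l m = R i j k l m"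
      unfolding Yf_def by (simp only: nf) (simp add: algebra_simps)
  qed
  have "(\<Sum>p\<in>UNIV. act5 (gstar yt) (tprod32 (us (\<lambda>x y z. R x z y (fst p) (snd p))) (Es (- 1 / 12) (fst p) (snd p)))) = act5 (gstar yt) (\<Sum>p\<in>UNIV. tprod32 (us (\<lambda>x y z. R x z y (fst p) (snd p))) (Es (- 1 / 12) (fst p) (snd p)))"
    by (rule act5_sum[symmetric])
  also have "\<dots> = R" unfolding Yexp Q by (rule Y)
  finally show ?thesis by (rule sym)
qed

lemma case_32Sa:
  fixes R :: "('n::finite) tensor5"
  assumes A: "is_acdct R"
  shows "R = (\<Sum>p\<in>UNIV. act5 (gstar yt) (tprod32 (ua (\<lambda>x y z. R x y z (fst p) (snd p))) (Es (1 / 24) (fst p) (snd p))))"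
proof -
  have Q: "(\<Sum>p\<in>UNIV. tprod32 (ua (\<lambda>x y z. R x y z (fst p) (snd p))) (Es (1 / 24) (fst p) (snd p))) = (\<lambda>i1 i2 i3 i4 i5. (1 / 72) * (R i1 i2 i3 i4 i5) - (1 / 72) * (R i2 i1 i3 i4 i5) - (1 / 144) * (R i2 i3 i1 i4 i5) + (1 / 144) * (R i3 i2 i1 i4 i5) - (1 / 144) * (R i3 i1 i2 i4 i5) + (1 / 144) * (R i1 i3 i2 i4 i5) + (1 / 72) * (R i1 i2 i3 i5 i4) - (1 / 72) * (R i2 i1 i3 i5 i4) - (1 / 144) * (R i2 i3 i1 i5 i4) + (1 / 144) * (R i3 i2 i1 i5 i4) - (1 / 144) * (R i3 i1 i2 i5 i4) + (1 / 144) * (R i1 i3 i2 i5 i4))"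
  proof (intro ext)
    fix i1 i2 i3 i4 i5
    have "(\<Sum>p\<in>UNIV. tprod32 (ua (\<lambda>x y z. R x y z (fst p) (snd p))) (Es (1 / 24) (fst p) (snd p))) i1 i2 i3 i4 i5 = (\<Sum>p\<in>UNIV. ua (\<lambda>x y z. R x y z (fst p) (snd p)) i1 i2 i3 * Es (1 / 24) (fst p) (snd p) i4 i5)"
      by (simp add: sum_fun_app5 tprod32_def)
    also have "\<dots> = (1 / 24) * ((\<lambda>p. ua (\<lambda>x y z. R x y z (fst p) (snd p)) i1 i2 i3) (i4,i5) + (\<lambda>p. ua (\<lambda>x y z. R x y z (fst p) (snd p)) i1 i2 i3) (i5,i4))"
      by (rule sum_Es'[where F = "(\<lambda>p. ua (\<lambda>x y z. R x y z (fst p) (snd p)) i1 i2 i3)"])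
    also have "\<dots> = (\<lambda>i1 i2 i3 i4 i5. (1 / 72) * (R i1 i2 i3 i4 i5) - (1 / 72) * (R i2 i1 i3 i4 i5) - (1 / 144) * (R i2 i3 i1 i4 i5) + (1 / 144) * (R i3 i2 i1 i4 i5) - (1 / 144) * (R i3 i1 i2 i4 i5) + (1 / 144) * (R i1 i3 i2 i4 i5) + (1 / 72) * (R i1 i2 i3 i5 i4) - (1 / 72) * (R i2 i1 i3 i5 i4) - (1 / 144) * (R i2 i3 i1 i5 i4) + (1 / 144) * (R i3 i2 i1 i5 i4) - (1 / 144) * (R i3 i1 i2 i5 i4) + (1 / 144) * (R i1 i3 i2 i5 i4)) i1 i2 i3 i4 i5"
      by (simp add: ua_def an12_def sym3_def alt3_def fun_diff_def field_simps)
    finally show "(\<Sum>p\<in>UNIV. tprod32 (ua (\<lambda>x y z. R x y z (fst p) (snd p))) (Es (1 / 24) (fst p) (snd p))) i1 i2 i3 i4 i5 = (\<lambda>i1 i2 i3 i4 i5. (1 / 72) * (R i1 i2 i3 i4 i5) - (1 / 72) * (R i2 i1 i3 i4 i5) - (1 / 144) * (R i2 i3 i1 i4 i5) + (1 / 144) * (R i3 i2 i1 i4 i5) - (1 / 144) * (R i3 i1 i2 i4 i5) + (1 / 144) * (R i1 i3 i2 i4 i5) + (1 / 72) * (R i1 i2 i3 i5 i4) - (1 / 72) * (R i2 i1 i3 i5 i4) - (1 / 144) * (R i2 i3 i1 i5 i4) + (1 / 144) * (R i3 i2 i1 i5 i4) - (1 / 144) * (R i3 i1 i2 i5 i4) +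 (1 / 144) * (R i1 i3 i2 i5 i4)) i1 i2 i3 i4 i5" .
  qed
  have Y: "Yf (\<lambda>i1 i2 i3 i4 i5. (1 / 72) * (R i1 i2 i3 i4 i5) - (1 / 72) * (R i2 i1 i3 i4 i5) - (1 / 144) * (R i2 i3 i1 i4 i5) + (1 / 144) * (R i3 i2 i1 i4 i5) - (1 / 144) * (R i3 i1 i2 i4 i5) + (1 / 144) * (R i1 i3 i2 i4 i5) + (1 / 72) * (R i1 i2 i3 i5 i4) - (1 / 72) * (R i2 i1 i3 i5 i4) - (1 / 144) * (R i2 i3 i1 i5 i4) + (1 / 144) * (R i3 i2 i1 i5 i4) - (1 / 144) * (R i3 i1 i2 i5 i4) + (1 / 144) * (R i1 i3 i2 i5 i4)) = R"
  proof (intro ext)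
    fix i j k l m
    note nf = acdct_nf[OF A, where i=i and j=j and k=k and l=l and m=m]
    show "Yf (\<lambda>i1 i2 i3 i4 i5. (1 / 72) * (R i1 i2 i3 i4 i5) - (1 / 72) * (R i2 i1 i3 i4 i5) - (1 / 144) * (R i2 i3 i1 i4 i5) + (1 / 144) * (R i3 i2 i1 i4 i5) - (1 / 144) * (R i3 i1 i2 i4 i5) + (1 / 144) * (R i1 i3 i2 i4 i5) + (1 / 72) * (R i1 i2 i3 i5 i4) - (1 / 72) * (R i2 i1 i3 i5 i4) - (1 / 144) * (R i2 i3 i1 i5 i4) + (1 / 144) * (R i3 i2 i1 i5 i4) - (1 / 144) * (R i3 i1 i2 i5 i4) + (1 / 144) * (R i1 i3 i2 i5 i4)) i j k l m = R i j k l m"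
      unfolding Yf_def by (simp only: nf) (simp add: algebra_simps)
  qed
  have "(\<Sum>p\<in>UNIV. act5 (gstar yt) (tprod32 (ua (\<lambda>x y z. R x y z (fst p) (snd p))) (Es (1 / 24) (fst p) (snd p)))) = act5 (gstar yt) (\<Sum>p\<in>UNIV. tprod32 (ua (\<lambda>x y z. R x y z (fst p) (snd p))) (Es (1 / 24) (fst p) (snd p)))"
    by (rule act5_sum[symmetric])
  also have "\<dots> = R" unfolding Yexp Q by (rule Y)
  finally show ?thesis by (rule sym)
qed

lemma case_32As:
  fixes R :: "('n::finite) tensor5"
  assumes A: "is_acdct R"
  shows "R = (\<Sum>p\<in>UNIV. act5 (gstar yt) (tprod32 (us (\<lambda>x y z. R x z y (fst p) (snd p))) (Ea (- 1 / 12) (fst p) (snd p))))"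
proof -
  have Q: "(\<Sum>p\<in>UNIV. tprod32 (us (\<lambda>x y z. R x z y (fst p) (snd p))) (Ea (- 1 / 12) (fst p) (snd p))) = (\<lambda>i1 i2 i3 i4 i5. - (1 / 36) * (R i1 i3 i2 i4 i5) - (1 / 36) * (R i2 i3 i1 i4 i5) + (1 / 72) * (R i2 i1 i3 i4 i5) + (1 / 72) * (R i3 i1 i2 i4 i5) + (1 / 72) * (R i3 i2 i1 i4 i5) + (1 / 72) * (R i1 i2 i3 i4 i5) + (1 / 36) * (R i1 i3 i2 i5 i4) + (1 / 36) * (R i2 i3 i1 i5 i4) - (1 / 72) * (R i2 i1 i3 i5 i4) - (1 / 72) * (R i3 i1 i2 i5 i4) - (1 / 72) * (R i3 i2 i1 i5 i4) - (1 / 72) * (R i1 i2 i3 i5 i4))"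
  proof (intro ext)
    fix i1 i2 i3 i4 i5
    have "(\<Sum>p\<in>UNIV. tprod32 (us (\<lambda>x y z. R x z y (fst p) (snd p))) (Ea (- 1 / 12) (fst p) (snd p))) i1 i2 i3 i4 i5 = (\<Sum>p\<in>UNIV. us (\<lambda>x y z. R x z y (fst p) (snd p)) i1 i2 i3 * Ea (- 1 / 12) (fst p) (snd p) i4 i5)"
      by (simp add: sum_fun_app5 tprod32_def)
    also have "\<dots> = (- 1 / 12) * ((\<lambda>p. us (\<lambda>x y z. R x z y (fst p) (snd p)) i1 i2 i3) (i4,i5) - (\<lambda>p. us (\<lambda>x y z. R x z y (fst p) (snd p)) i1 i2 i3) (i5,i4))"
      by (rule sum_Ea'[where F = "(\<lambda>p. us (\<lambda>x y z. R x z y (fst p) (snd p)) i1 i2 i3)"])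
    also have "\<dots> = (\<lambda>i1 i2 i3 i4 i5. - (1 / 36) * (R i1 i3 i2 i4 i5) - (1 / 36) * (R i2 i3 i1 i4 i5) + (1 / 72) * (R i2 i1 i3 i4 i5) + (1 / 72) * (R i3 i1 i2 i4 i5) + (1 / 72) * (R i3 i2 i1 i4 i5) + (1 / 72) * (R i1 i2 i3 i4 i5) + (1 / 36) * (R i1 i3 i2 i5 i4) + (1 / 36) * (R i2 i3 i1 i5 i4) - (1 / 72) * (R i2 i1 i3 i5 i4) - (1 / 72) * (R i3 i1 i2 i5 i4) - (1 / 72) * (R i3 i2 i1 i5 i4) - (1 / 72) * (R i1 i2 i3 i5 i4)) i1 i2 i3 i4 i5"
      by (simp add: us_def sy12_def sym3_def alt3_def fun_diff_def field_simps)
    finally show "(\<Sum>p\<in>UNIV. tprod32 (us (\<lambda>x y z. R x z y (fst p) (snd p))) (Ea (- 1 / 12) (fst p) (snd p))) i1 i2 i3 i4 i5 = (\<lambda>i1 i2 i3 i4 i5. - (1 / 36) * (R i1 i3 i2 i4 i5) - (1 / 36) * (R i2 i3 i1 i4 i5) + (1 / 72) * (R i2 i1 i3 i4 i5) + (1 / 72) * (R i3 i1 i2 i4 i5) + (1 / 72) * (R i3 i2 i1 i4 i5) + (1 / 72) * (R i1 i2 i3 i4 i5) + (1 / 36) * (R i1 i3 i2 i5 i4) + (1 / 36) * (R i2 i3 i1 i5 i4) - (1 / 72) * (R i2 i1 i3 i5 i4) - (1 / 72) * (R i3 i1 i2 i5 i4) - (1 / 72) * (R i3 i2 i1 i5 i4)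 - (1 / 72) * (R i1 i2 i3 i5 i4)) i1 i2 i3 i4 i5" .
  qed
  have Y: "Yf (\<lambda>i1 i2 i3 i4 i5. - (1 / 36) * (R i1 i3 i2 i4 i5) - (1 / 36) * (R i2 i3 i1 i4 i5) + (1 / 72) * (R i2 i1 i3 i4 i5) + (1 / 72) * (R i3 i1 i2 i4 i5) + (1 / 72) * (R i3 i2 i1 i4 i5) + (1 / 72) * (R i1 i2 i3 i4 i5) + (1 / 36) * (R i1 i3 i2 i5 i4) + (1 / 36) * (R i2 i3 i1 i5 i4) - (1 / 72) * (R i2 i1 i3 i5 i4) - (1 / 72) * (R i3 i1 i2 i5 i4) - (1 / 72) * (R i3 i2 i1 i5 i4) - (1 / 72) * (R i1 i2 i3 i5 i4)) = R"
  proof (intro ext)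
    fix i j k l m
    note nf = acdct_nf[OF A, where i=i and j=j and k=k and l=l and m=m]
    show "Yf (\<lambda>i1 i2 i3 i4 i5. - (1 / 36) * (R i1 i3 i2 i4 i5) - (1 / 36) * (R i2 i3 i1 i4 i5) + (1 / 72) * (R i2 i1 i3 i4 i5) + (1 / 72) * (R i3 i1 i2 i4 i5) + (1 / 72) * (R i3 i2 i1 i4 i5) + (1 / 72) * (R i1 i2 i3 i4 i5) + (1 / 36) * (R i1 i3 i2 i5 i4) + (1 / 36) * (R i2 i3 i1 i5 i4) - (1 / 72) * (R i2 i1 i3 i5 i4) - (1 / 72) * (R i3 i1 i2 i5 i4) - (1 / 72) * (R i3 i2 i1 i5 i4) - (1 / 72) * (R i1 i2 i3 i5 i4)) i j k l m = R i j k l m"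
      unfolding Yf_def by (simp only: nf) (simp add: algebra_simps)
  qed
  have "(\<Sum>p\<in>UNIV. act5 (gstar yt) (tprod32 (us (\<lambda>x y z. R x z y (fst p) (snd p))) (Ea (- 1 / 12) (fst p) (snd p)))) = act5 (gstar yt) (\<Sum>p\<in>UNIV. tprod32 (us (\<lambda>x y z. R x z y (fst p) (snd p))) (Ea (- 1 / 12) (fst p) (snd p)))"
    by (rule act5_sum[symmetric])
  also have "\<dots> = R" unfolding Yexp Q by (rule Y)
  finally show ?thesis by (rule sym)
qed

lemma case_32Aa:
  fixes R :: "('n::finite) tensor5"
  assumes A: "is_acdct R"
  shows "R = (\<Sum>p\<in>UNIV. act5 (gstar yt) (tprod32 (ua (\<lambda>x y z. R x y z (fst p) (snd p))) (Ea (1 / 24) (fst p) (snd p))))"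
proof -
  have Q: "(\<Sum>p\<in>UNIV. tprod32 (ua (\<lambda>x y z. R x y z (fst p) (snd p))) (Ea (1 / 24) (fst p) (snd p))) = (\<lambda>i1 i2 i3 i4 i5. (1 / 72) * (R i1 i2 i3 i4 i5) - (1 / 72) * (R i2 i1 i3 i4 i5) - (1 / 144) * (R i2 i3 i1 i4 i5) + (1 / 144) * (R i3 i2 i1 i4 i5) - (1 / 144) * (R i3 i1 i2 i4 i5) + (1 / 144) * (R i1 i3 i2 i4 i5) - (1 / 72) * (R i1 i2 i3 i5 i4) + (1 / 72) * (R i2 i1 i3 i5 i4) + (1 / 144) * (R i2 i3 i1 i5 i4) - (1 / 144) * (R i3 i2 i1 i5 i4) + (1 / 144) * (R i3 i1 i2 i5 i4) - (1 / 144) * (R i1 i3 i2 i5 i4))"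
  proof (intro ext)
    fix i1 i2 i3 i4 i5
    have "(\<Sum>p\<in>UNIV. tprod32 (ua (\<lambda>x y z. R x y z (fst p) (snd p))) (Ea (1 / 24) (fst p) (snd p))) i1 i2 i3 i4 i5 = (\<Sum>p\<in>UNIV. ua (\<lambda>x y z. R x y z (fst p) (snd p)) i1 i2 i3 * Ea (1 / 24) (fst p) (snd p) i4 i5)"
      by (simp add: sum_fun_app5 tprod32_def)
    also have "\<dots> = (1 / 24) * ((\<lambda>p. ua (\<lambda>x y z. R x y z (fst p) (snd p)) i1 i2 i3) (i4,i5) - (\<lambda>p. ua (\<lambda>x y z. R x y z (fst p) (snd p)) i1 i2 i3) (i5,i4))"
      by (rule sum_Ea'[where F = "(\<lambda>p. ua (\<lambda>x y z. R x y z (fst p) (snd p)) i1 i2 i3)"])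
    also have "\<dots> = (\<lambda>i1 i2 i3 i4 i5. (1 / 72) * (R i1 i2 i3 i4 i5) - (1 / 72) * (R i2 i1 i3 i4 i5) - (1 / 144) * (R i2 i3 i1 i4 i5) + (1 / 144) * (R i3 i2 i1 i4 i5) - (1 / 144) * (R i3 i1 i2 i4 i5) + (1 / 144) * (R i1 i3 i2 i4 i5) - (1 / 72) * (R i1 i2 i3 i5 i4) + (1 / 72) * (R i2 i1 i3 i5 i4) + (1 / 144) * (R i2 i3 i1 i5 i4) - (1 / 144) * (R i3 i2 i1 i5 i4) + (1 / 144) * (R i3 i1 i2 i5 i4) - (1 / 144) * (R i1 i3 i2 i5 i4)) i1 i2 i3 i4 i5"
      by (simp add: ua_def an12_def sym3_def alt3_def fun_diff_def field_simps)
    finally show "(\<Sum>p\<in>UNIV. tprod32 (ua (\<lambda>x y z. R x y z (fst p) (snd p))) (Ea (1 / 24) (fst p) (snd p))) i1 i2 i3 i4 i5 = (\<lambda>i1 i2 i3 i4 i5. (1 / 72) * (R i1 i2 i3 i4 i5) - (1 / 72) * (R i2 i1 i3 i4 i5) - (1 / 144) * (R i2 i3 i1 i4 i5) + (1 / 144) * (R i3 i2 i1 i4 i5) - (1 / 144) * (R i3 i1 i2 i4 i5) + (1 / 144) * (R i1 i3 i2 i4 i5) - (1 / 72) * (R i1 i2 i3 i5 i4) + (1 / 72) * (R i2 i1 i3 i5 i4) + (1 / 144) * (R i2 i3 i1 i5 i4) - (1 / 144) * (R i3 i2 i1 i5 i4) + (1 / 144) * (R i3 i1 i2 i5 i4)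 - (1 / 144) * (R i1 i3 i2 i5 i4)) i1 i2 i3 i4 i5" .
  qed
  have Y: "Yf (\<lambda>i1 i2 i3 i4 i5. (1 / 72) * (R i1 i2 i3 i4 i5) - (1 / 72) * (R i2 i1 i3 i4 i5) - (1 / 144) * (R i2 i3 i1 i4 i5) + (1 / 144) * (R i3 i2 i1 i4 i5) - (1 / 144) * (R i3 i1 i2 i4 i5) + (1 / 144) * (R i1 i3 i2 i4 i5) - (1 / 72) * (R i1 i2 i3 i5 i4) + (1 / 72) * (R i2 i1 i3 i5 i4) + (1 / 144) * (R i2 i3 i1 i5 i4) - (1 / 144) * (R i3 i2 i1 i5 i4) + (1 / 144) * (R i3 i1 i2 i5 i4) - (1 / 144) * (R i1 i3 i2 i5 i4)) = R"
  proof (intro ext)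
    fix i j k l m
    note nf = acdct_nf[OF A, where i=i and j=j and k=k and l=l and m=m]
    show "Yf (\<lambda>i1 i2 i3 i4 i5. (1 / 72) * (R i1 i2 i3 i4 i5) - (1 / 72) * (R i2 i1 i3 i4 i5) - (1 / 144) * (R i2 i3 i1 i4 i5) + (1 / 144) * (R i3 i2 i1 i4 i5) - (1 / 144) * (R i3 i1 i2 i4 i5) + (1 / 144) * (R i1 i3 i2 i4 i5) - (1 / 72) * (R i1 i2 i3 i5 i4) + (1 / 72) * (R i2 i1 i3 i5 i4) + (1 / 144) * (R i2 i3 i1 i5 i4) - (1 / 144) * (R i3 i2 i1 i5 i4) + (1 / 144) * (R i3 i1 i2 i5 i4) - (1 / 144) * (R i1 i3 i2 i5 i4)) i j k l m = R i j k l m"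
      unfolding Yf_def by (simp only: nf) (simp add: algebra_simps)
  qed
  have "(\<Sum>p\<in>UNIV. act5 (gstar yt) (tprod32 (ua (\<lambda>x y z. R x y z (fst p) (snd p))) (Ea (1 / 24) (fst p) (snd p)))) = act5 (gstar yt) (\<Sum>p\<in>UNIV. tprod32 (ua (\<lambda>x y z. R x y z (fst p) (snd p))) (Ea (1 / 24) (fst p) (snd p)))"
    by (rule act5_sum[symmetric])
  also have "\<dots> = R" unfolding Yexp Q by (rule Y)
  finally show ?thesis by (rule sym)
qed

lemma sum_in_finsums:
  fixes f :: "'b \<Rightarrow> 'a::comm_monoid_add"
  assumes "finite A" "\<And>p. p \<in> A \<Longrightarrow> f p \<in> G"
  shows "sum f A \<in> finsums G"
  using assms
proof (induction A rule: finite_induct)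
  case empty
  show ?case unfolding finsums_def by (rule CollectI, rule exI[of _ "[]"]) simp
next
  case (insert a A)
  then have "sum f A \<in> finsums G" by blast
  then obtain xs where xs: "sum f A = sum_list xs" "set xs \<subseteq> G" unfolding finsums_def by blast
  have "sum f (insert a A) = sum_list (f a # xs)" using insert.hyps xs(1) by simp
  moreover have "set (f a # xs) \<subseteq> G" using xs(2) insert.prems by auto
  ultimately show ?case unfolding finsums_def by blast
qed

lemma acdct_0: "is_acdct (0 :: 'n tensor5)"
  by (simp add: is_acdct_def)

lemma acdct_add:
  fixes a b :: "'n tensor5"
  assumes "is_acdct a" "is_acdct b"
  shows "is_acdct (a + b)"
  unfolding is_acdct_def
proof (intro allI)
  fix i j k l m
  have a: "a i j k l m = - a j i k l m" "a i j k l m = - a i j l k m" "a i j k l m = a k l i j m"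
     "a i j k l m + a i k l j m + a i l j k m = 0" "a i j k l m + a i j l m k + a i j m k l = 0"
    using assms(1) unfolding is_acdct_def by blast+
  have b: "b i j k l m = - b j i k l m" "b i j k l m = - b i j l k m" "b i j k l m = b k l i j m"
     "b i j k l m + b i k l j m + b i l j k m = 0" "b i j k l m + b i j l m k + b i j m k l = 0"
    using assms(2) unfolding is_acdct_def by blast+
  show "(a + b) i j k l m = - (a + b) j i k l m \<and>
        (a + b) i j k l m = - (a + b) i j l k m \<and>
        (a + b) i j k l m = (a + b) k l i j m \<and>
        (a + b) i j k l m + (a + b) i k l j m + (a + b) i l j k m = 0 \<and>
        (a + b) i j k l m + (a + b) i j l m k + (a + b) i j m k l = 0"
    unfolding plus_fun_apply using a b by linarith
qed

lemma finsums_acdct: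
  assumes "\<And>g. g \<in> G \<Longrightarrow> is_acdct g" "x \<in> finsums G"
  shows "is_acdct x"
proof -
  obtain xs where xs: "x = sum_list xs" "set xs \<subseteq> G" using assms(2) unfolding finsums_def by blast
  have "is_acdct (sum_list xs)" using xs(2)
  proof (induction xs)
    case Nil show ?case unfolding sum_list.Nil by (rule acdct_0)
  next
    case (Cons y ys)
    then have "is_acdct y" "is_acdct (sum_list ys)" using assms(1) by auto
    then show ?case unfolding sum_list.Cons by (rule acdct_add)
  qed
  then show ?thesis using xs(1) by simp
qed

lemma Yf_acdct: "is_acdct (Yf T)"
  unfolding is_acdct_def
proof (intro allI conjI)
  fix i j k l m
  show "Yf T i j k l m = - Yf T j i k l m" by (simp add: Yf_def algebra_simps)
  show "Yf T i j k l m = - Yf T i j l k m" by (simp add: Yf_def algebra_simps)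
  show "Yf T i j k l m = Yf T k l i j m" by (simp add: Yf_def algebra_simps)
  show "Yf T i j k l m + Yf T i k l j m + Yf T i l j k m = 0" by (simp add: Yf_def algebra_simps)
  show "Yf T i j k l m + Yf T i j l m k + Yf T i j m k l = 0" by (simp add: Yf_def algebra_simps)
qed

lemma gen_acdct: "is_acdct (act5 (gstar yt) T)"
  by (simp add: Yexp Yf_acdct)

lemma main_eq:
  fixes G :: "('n::finite) tensor5 set"
  assumes "\<And>R. is_acdct R \<Longrightarrow> R \<in> finsums G" "\<And>g. g \<in> G \<Longrightarrow> is_acdct g"
  shows "{R. is_acdct R} = finsums G"
  using assms finsums_acdct[OF assms(2)] by blast

theorem theorem7:
  fixes U :: "('n::finite) tensor3 set"
  assumes "U = U_s \<or> U = U_a"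
  shows "{R. is_acdct R} = finsums {act5 (gstar yt) (tprod23 S u) | S u. symmetric2 S \<and> u \<in> U}
       \<and> {R. is_acdct R} = finsums {act5 (gstar yt) (tprod32 u S) | S u. symmetric2 S \<and> u \<in> U}
       \<and> {R. is_acdct R} = finsums {act5 (gstar yt) (tprod23 A u) | A u. alternating2 A \<and> u \<in> U}
       \<and> {R. is_acdct R} = finsums {act5 (gstar yt) (tprod32 u A) | A u. alternating2 A \<and> u \<in> U}"
proof -
  have g1: "\<And>g. g \<in> {act5 (gstar yt) (tprod23 S u) | S u. symmetric2 S \<and> u \<in> U} \<Longrightarrow> is_acdct g"
    using gen_acdct by blast
  have g2: "\<And>g. g \<in> {act5 (gstar yt) (tprod32 u S) | S u. symmetric2 S \<and> u \<in> U} \<Longrightarrow> is_acdct g"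
    using gen_acdct by blast
  have g3: "\<And>g. g \<in> {act5 (gstar yt) (tprod23 A u) | A u. alternating2 A \<and> u \<in> U} \<Longrightarrow> is_acdct g"
    using gen_acdct by blast
  have g4: "\<And>g. g \<in> {act5 (gstar yt) (tprod32 u A) | A u. alternating2 A \<and> u \<in> U} \<Longrightarrow> is_acdct g"
    using gen_acdct by blast
  from assms show ?thesis
  proof
    assume U: "U = U_s"
    have r1: "R \<in> finsums {act5 (gstar yt) (tprod23 S u) | S u. symmetric2 S \<and> u \<in> U}" if "is_acdct R" for R
      by (subst case_23Ss[OF that], rule sum_in_finsums) (auto simp: U intro: Es_sym us_in)
    have r2: "R \<in> finsums {act5 (gstar yt) (tprod32 u S) | S u. symmetric2 S \<and> u \<in> U}" if "is_acdct R" for R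
      by (subst case_32Ss[OF that], rule sum_in_finsums) (auto simp: U intro: Es_sym us_in)
    have r3: "R \<in> finsums {act5 (gstar yt) (tprod23 A u) | A u. alternating2 A \<and> u \<in> U}" if "is_acdct R" for R
      by (subst case_23As[OF that], rule sum_in_finsums) (auto simp: U intro: Ea_alt us_in)
    have r4: "R \<in> finsums {act5 (gstar yt) (tprod32 u A) | A u. alternating2 A \<and> u \<in> U}" if "is_acdct R" for R
      by (subst case_32As[OF that], rule sum_in_finsums) (auto simp: U intro: Ea_alt us_in)
    show ?thesis using main_eq[OF r1 g1] main_eq[OF r2 g2] main_eq[OF r3 g3] main_eq[OF r4 g4] by blast
  next
    assume U: "U = U_a"
    have r1: "R \<in> finsums {act5 (gstar yt) (tprod23 S u) | S u. symmetric2 S \<and> u \<in> U}" if "is_acdct R" for R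
      by (subst case_23Sa[OF that], rule sum_in_finsums) (auto simp: U intro: Es_sym ua_in)
    have r2: "R \<in> finsums {act5 (gstar yt) (tprod32 u S) | S u. symmetric2 S \<and> u \<in> U}" if "is_acdct R" for R
      by (subst case_32Sa[OF that], rule sum_in_finsums) (auto simp: U intro: Es_sym ua_in)
    have r3: "R \<in> finsums {act5 (gstar yt) (tprod23 A u) | A u. alternating2 A \<and> u \<in> U}" if "is_acdct R" for R
      by (subst case_23Aa[OF that], rule sum_in_finsums) (auto simp: U intro: Ea_alt ua_in)
    have r4: "R \<in> finsums {act5 (gstar yt) (tprod32 u A) | A u. alternating2 A \<and> u \<in> U}" if "is_acdct R" for R
      by (subst case_32Aa[OF that], rule sum_in_finsums) (auto simp: U intro: Ea_alt ua_in)
    show ?thesis using main_eq[OF r1 g1] main_eq[OF r2 g2] main_eq[OF r3 g3] main_eq[OF r4 g4] by blast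
  qed
qed

end
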